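(* Let $Q$ be a finite-dimensional real affine space modelled on $V$, let $n_1,n_2\ge0$ be integers and let $f\in A(Q)$ be such that for every $k\le n_1+n_2$ the multidirectional derivative $\mathrm d^kf$ exists on all of $Q\times V^k$ and is continuous, and such that $\mathrm d^{n_1}(\mathrm d^{n_2}f)$ exists. Then $\mathrm d^{n_1}\mathrm d^{n_2}f=\mathrm d^{n_1+n_2}f$, i.e. for all $q\in Q$, $v_1,\dots,v_{n_1+n_2}\in V$, $$\mathrm d^{n_1}\mathrm d^{n_2}f(q;v_1,\dots,v_{n_1},v_{n_1+1},\dots,v_{n_1+n_2})=\mathrm d^{n_1+n_2}f(q;v_1,\dots,v_{n_1+n_2}).$$
   Context: For $F:Q\times V^m\to\mathbb R$ (with $m\ge0$; $m=0$ means a function on $Q$) and $n\ge1$, the polarization is $\delta^nF(q;v_1,\dots,v_n,w_1,\dots,w_m)=(-1)^n\sum_{I\subset\{1,\dots,n\}}(-1)^{|I|}F(q+\sum_{i\in I}v_i;w_1,\dots,w_m)$ (the $I=\emptyset$ term is $F(q;w)$), $\delta^0F=F$, and the multidirectional derivative is $\mathrm d^nF(q;v_1,\dots,v_n,w_1,\dots,w_m)=\lim_{s\to0}s^{-n}\delta^nF(q;sv_1,\dots,sv_n,w_1,\dots,w_m)$ when the limit exists. Thus $\mathrm d^{n_1}(\mathrm d^{n_2}f)$ differentiates the function $\mathrm d^{n_2}f$ in the point variable, placing the $n_1$ new vector arguments first. *)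

theory Defs
  imports "HOL-Analysis.Analysis"
begin

text \<open>Q is a finite-dimensional real affine space modelled on V; after choosing an origin
we identify Q with V, a type of class euclidean_space. A function F : Q x V^m -> R is
represented as F :: 'a => 'a list => real, the list holding the m vector arguments.\<close>

definition polar :: "nat \<Rightarrow> ('a::real_vector \<Rightarrow> 'a list \<Rightarrow> real) \<Rightarrow> 'a \<Rightarrow> 'a list \<Rightarrow> real" where
  "polar n F q us = (-1::real) ^ n *
     (\<Sum>I\<in>Pow {0..<n}. (-1::real) ^ card I * F (q + (\<Sum>i\<in>I. us ! i)) (drop n us))"

definition md_quot :: "nat \<Rightarrow> ('a::real_vector \<Rightarrow> 'a list \<Rightarrow> real) \<Rightarrow> 'a \<Rightarrow> 'a list \<Rightarrow> real \<Rightarrow> real" where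
  "md_quot n F q us s = inverse (s ^ n) * polar n F q (map (scaleR s) (take n us) @ drop n us)"

definition has_md :: "nat \<Rightarrow> ('a::real_vector \<Rightarrow> 'a list \<Rightarrow> real) \<Rightarrow> 'a \<Rightarrow> 'a list \<Rightarrow> real \<Rightarrow> bool" where
  "has_md n F q us L \<longleftrightarrow> (md_quot n F q us \<longlongrightarrow> L) (at 0)"

definition md :: "nat \<Rightarrow> ('a::real_normed_vector \<Rightarrow> 'a list \<Rightarrow> real) \<Rightarrow> 'a \<Rightarrow> 'a list \<Rightarrow> real" where
  "md n F q us = Lim (at 0) (md_quot n F q us)"

definition md_exists :: "nat \<Rightarrow> nat \<Rightarrow> ('a::real_vector \<Rightarrow> 'a list \<Rightarrow> real) \<Rightarrow> bool" where
  "md_exists n m F \<longleftrightarrow> (\<forall>q us. length us = n + m \<longrightarrow> (\<exists>L. has_md n F q us L))"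

definition cont_on_prod :: "nat \<Rightarrow> ('a::metric_space \<Rightarrow> 'a list \<Rightarrow> real) \<Rightarrow> bool" where
  "cont_on_prod k G \<longleftrightarrow> (\<forall>q us. length us = k \<longrightarrow> (\<forall>e>0. \<exists>d>0. \<forall>q' us'.
      length us' = k \<and> dist q' q < d \<and> (\<forall>i<k. dist (us' ! i) (us ! i) < d)
      \<longrightarrow> \<bar>G q' us' - G q us\<bar> < e))"

end

theory Submission
  imports Defs
begin

definition Dl :: "nat \<Rightarrow> 'a::real_vector list \<Rightarrow> ('a \<Rightarrow> real) \<Rightarrow> 'a \<Rightarrow> real" where
  "Dl n us g q = (-1::real) ^ n *
     (\<Sum>I\<in>Pow {0..<n}. (-1::real) ^ card I * g (q + (\<Sum>i\<in>I. us ! i)))"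

lemma Dl_0[simp]: "Dl 0 us g q = g q"
  by (simp add: Dl_def)

lemma Dl_Suc: "Dl (Suc n) us g q = Dl n us g (q + us ! n) - Dl n us g q"
proof -
  have P: "Pow {0..<Suc n} = Pow {0..<n} \<union> insert n ` Pow {0..<n}"
    by (simp add: atLeast0_lessThan_Suc Pow_insert)
  have disj: "Pow {0..<n} \<inter> insert n ` Pow {0..<n} = {}" by auto
  have inj: "inj_on (insert n) (Pow {0..<n})"
    by (rule inj_onI) (metis PowD atLeastLessThan_iff insert_ident lessThan_iff order_less_irrefl subsetD atLeast0LessThan)
  let ?h = "\<lambda>I. (-1::real) ^ card I * g (q + (\<Sum>i\<in>I. us ! i))"
  have "(\<Sum>I\<in>Pow {0..<Suc n}. ?h I) = (\<Sum>I\<in>Pow {0..<n}. ?h I) + (\<Sum>I\<in>insert n ` Pow {0..<n}. ?h I)"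
    unfolding P by (rule sum.union_disjoint) (auto simp: disj)
  also have "(\<Sum>I\<in>insert n ` Pow {0..<n}. ?h I) = (\<Sum>I\<in>Pow {0..<n}. ?h (insert n I))"
    by (rule sum.reindex[OF inj, unfolded comp_def])
  also have "\<dots> = (\<Sum>I\<in>Pow {0..<n}. - ((-1::real) ^ card I * g ((q + us ! n) + (\<Sum>i\<in>I. us ! i))))"
  proof (rule sum.cong[OF refl])
    fix I assume "I \<in> Pow {0..<n}"
    hence I: "finite I" "n \<notin> I" by (auto dest: finite_subset)
    show "?h (insert n I) = - ((-1::real) ^ card I * g ((q + us ! n) + (\<Sum>i\<in>I. us ! i)))"
      using I by (simp add: add_ac)
  qed
  finally have S: "(\<Sum>I\<in>Pow {0..<Suc n}. ?h I) = (\<Sum>I\<in>Pow {0..<n}. ?h I)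
      - (\<Sum>I\<in>Pow {0..<n}. (-1::real) ^ card I * g ((q + us ! n) + (\<Sum>i\<in>I. us ! i)))"
    by (simp add: sum_negf)
  show ?thesis
    unfolding Dl_def S by (simp add: right_diff_distrib)
qed

lemma Dl_cong: "(\<And>i. i < n \<Longrightarrow> us ! i = vs ! i) \<Longrightarrow> Dl n us g q = Dl n vs g q"
  unfolding Dl_def
  by (intro arg_cong2[where f="(*)"] refl sum.cong) (auto intro!: arg_cong[where f=g] sum.cong simp: subset_iff)

lemma Dl_lin: "Dl n us (\<lambda>p. a * g p + b * h p) q = a * Dl n us g q + b * Dl n us h q"
  by (induct n arbitrary: q) (simp_all add: Dl_Suc algebra_simps)

lemma Dl_diff: "Dl n us (\<lambda>p. g p - h p) q = Dl n us g q - Dl n us h q"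
  using Dl_lin[of n us 1 g "-1" h q] by simp

lemma Dl_add: "Dl n us (\<lambda>p. g p + h p) q = Dl n us g q + Dl n us h q"
  using Dl_lin[of n us 1 g 1 h q] by simp

lemma Dl_cmult: "Dl n us (\<lambda>p. a * g p) q = a * Dl n us g q"
  using Dl_lin[of n us a g 0 g q] by simp

lemma Dl_shift: "Dl n us (\<lambda>p. g (p + c)) q = Dl n us g (q + c)"
  by (induct n arbitrary: q) (simp_all add: Dl_Suc algebra_simps)

lemma Dl_compose:
  assumes "length a = n"
  shows "Dl (n + m) (a @ b) g q = Dl n a (\<lambda>x. Dl m b g x) q"
proof (induct m arbitrary: q)
  case 0
  show ?case by simp (rule Dl_cong, simp add: assms nth_append)
next
  case (Suc m)
  have "Dl (n + Suc m) (a @ b) g q = Dl (n + m) (a @ b) g (q + b ! m) - Dl (n + m) (a @ b) g q"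
    using assms by (simp add: Dl_Suc nth_append)
  also have "\<dots> = Dl n a (\<lambda>x. Dl m b g x) (q + b ! m) - Dl n a (\<lambda>x. Dl m b g x) q"
    by (simp only: Suc)
  also have "\<dots> = Dl n a (\<lambda>x. Dl m b g (x + b ! m)) q - Dl n a (\<lambda>x. Dl m b g x) q"
    by (simp only: Dl_shift)
  also have "\<dots> = Dl n a (\<lambda>x. Dl (Suc m) b g x) q"
    by (simp add: Dl_Suc Dl_diff)
  finally show ?case .
qed

lemma Dl_reduce:
  assumes "length cs = m"
  shows "Dl (Suc (Suc m)) (cs @ [a, b]) g q =
     Dl (Suc m) (cs @ [a + b]) g q - Dl (Suc m) (cs @ [a]) g q - Dl (Suc m) (cs @ [b]) g q"
proof -
  have e: "\<And>x ys. Dl m (cs @ ys) g x = Dl m cs g x"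
    by (rule Dl_cong) (simp add: assms nth_append)
  show ?thesis using assms
    by (simp add: Dl_Suc nth_append e algebra_simps)
qed

lemma polar_Dl: "polar n F q us = Dl n us (\<lambda>p. F p (drop n us)) q"
  by (simp add: polar_def Dl_def)

lemma md_quot_Dl:
  assumes "n \<le> length us"
  shows "md_quot n F q us s = Dl n (map (scaleR s) us) (\<lambda>p. F p (drop n us)) q / s ^ n"
proof -
  have d: "drop n (map (scaleR s) (take n us) @ drop n us) = drop n us"
    using assms by simp
  have "Dl n (map (scaleR s) (take n us) @ drop n us) (\<lambda>p. F p (drop n us)) q
      = Dl n (map (scaleR s) us) (\<lambda>p. F p (drop n us)) q"
    by (rule Dl_cong) (use assms in \<open>auto simp: nth_append\<close>)
  moreover have "md_quot n F q us s = inverse (s ^ n) *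
      Dl n (map (scaleR s) (take n us) @ drop n us) (\<lambda>p. F p (drop n us)) q"
    unfolding md_quot_def polar_Dl d ..
  ultimately show ?thesis
    by (simp add: divide_inverse mult.commute)
qed

lemma mvt_gen:
  fixes f f' :: "real \<Rightarrow> real"
  assumes "\<And>x. (f has_real_derivative f' x) (at x)"
  shows "\<exists>e. \<bar>e - t\<bar> \<le> \<bar>c\<bar> \<and> f (t + c) - f t = c * f' e"
proof (cases c "0::real" rule: linorder_cases)
  case less
  obtain z where z: "t + c < z" "z < t" "f t - f (t + c) = (t - (t + c)) * f' z"
    using MVT2[of "t + c" t f f'] less assms by auto
  thus ?thesis by (intro exI[of _ z]) (auto simp: algebra_simps)
next
  case equal thus ?thesis by (intro exI[of _ t]) simp
next
  case greater
  obtain z where z: "t < z" "z < t + c" "f (t + c) - f t = (t + c - t) * f' z"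
    using MVT2[of t "t + c" f f'] greater assms by auto
  thus ?thesis by (intro exI[of _ z]) (auto simp: algebra_simps)
qed

lemma Dl_deriv:
  fixes g g' :: "real \<Rightarrow> real"
  assumes "\<And>x. (g has_real_derivative g' x) (at x)"
  shows "((\<lambda>x. Dl n us g x) has_real_derivative Dl n us g' x) (at x)"
proof (induct n arbitrary: x)
  case 0 thus ?case using assms by simp
next
  case (Suc n)
  have "((\<lambda>x. Dl n us g (x + us ! n)) has_real_derivative Dl n us g' (x + us ! n)) (at x)"
  proof -
    have "((\<lambda>y. y + us ! n) has_real_derivative 1) (at x)"
      by (auto intro!: derivative_eq_intros)
    from DERIV_chain2[where g="\<lambda>y. y + us ! n", OF Suc[of "x + us ! n"] this]
    show ?thesis by simp
  qed
  thus ?case unfolding Dl_Suc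
    by (auto intro!: derivative_eq_intros Suc)
qed

definition Cfam :: "nat \<Rightarrow> (nat \<Rightarrow> real \<Rightarrow> real) \<Rightarrow> bool" where
  "Cfam n D \<longleftrightarrow> (\<forall>j<n. \<forall>x. (D j has_real_derivative D (Suc j) x) (at x))"

lemma Cfam_shift: "Cfam (Suc n) D \<Longrightarrow> Cfam n (\<lambda>j. D (Suc j))"
  by (simp add: Cfam_def)

lemma Cfam_mono: "Cfam n D \<Longrightarrow> m \<le> n \<Longrightarrow> Cfam m D"
  by (simp add: Cfam_def)

lemma MVTD:
  assumes "Cfam m D" "length cs = m"
  shows "\<exists>e. \<bar>e - t\<bar> \<le> sum_list (map abs cs) \<and> Dl m cs (D 0) t = prod_list cs * D m e"
  using assms
proof (induct m arbitrary: cs D t)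
  case 0 thus ?case by (intro exI[of _ t]) simp
next
  case (Suc m)
  obtain cs' c where cs: "cs = cs' @ [c]" and l: "length cs' = m"
    using Suc.prems(2) by (metis length_Suc_conv_rev)
  have e1: "\<And>x. Dl m (cs' @ [c]) (D 0) x = Dl m cs' (D 0) x"
    by (rule Dl_cong) (simp add: l nth_append)
  have d: "\<And>x. ((\<lambda>x. Dl m cs' (D 0) x) has_real_derivative Dl m cs' (D 1) x) (at x)"
    by (rule Dl_deriv) (use Suc.prems(1) in \<open>simp add: Cfam_def\<close>)
  obtain e where e: "\<bar>e - t\<bar> \<le> \<bar>c\<bar>" "Dl m cs' (D 0) (t + c) - Dl m cs' (D 0) t = c * Dl m cs' (D 1) e"
    using mvt_gen[OF d] by blast
  obtain e' where e': "\<bar>e' - e\<bar> \<le> sum_list (map abs cs')"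
     "Dl m cs' ((\<lambda>j. D (Suc j)) 0) e = prod_list cs' * (\<lambda>j. D (Suc j)) m e'"
    using Suc.hyps[OF Cfam_shift[OF Suc.prems(1)] l] by blast
  have "Dl (Suc m) cs (D 0) t = c * (prod_list cs' * D (Suc m) e')"
    using e e' by (simp add: Dl_Suc e1 cs l nth_append)
  moreover have "\<bar>e' - t\<bar> \<le> sum_list (map abs cs)"
    using e(1) e'(1) by (simp add: cs)
  ultimately show ?case by (intro exI[of _ e']) (simp add: cs mult_ac)
qed

lemma prod_list_scale: "prod_list (map ((*) s) cs) = s ^ length cs * prod_list (cs::real list)"
  by (induct cs) (simp_all add: mult_ac)

lemma sum_list_abs_scale: "sum_list (map abs (map ((*) s) cs)) = \<bar>s\<bar> * sum_list (map abs (cs::real list))"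
  by (induct cs) (simp_all add: abs_mult algebra_simps)

lemma sum_list_abs_nonneg: "0 \<le> sum_list (map abs (cs::real list))"
  by (induct cs) simp_all

lemma dprod_limit_smooth:
  assumes "Cfam m D" "continuous_on UNIV (D m)" "length cs = m"
  shows "((\<lambda>s. Dl m (map ((*) s) cs) (D 0) t / s ^ m) \<longlongrightarrow> prod_list cs * D m t) (at 0)"
proof (rule LIM_I)
  fix r :: real assume r: "0 < r"
  let ?P = "\<bar>prod_list cs\<bar> + 1" and ?S = "sum_list (map abs cs) + 1"
  have P: "0 < ?P" "0 < ?S" using sum_list_abs_nonneg[of cs] by auto
  have "isCont (D m) t" using assms(2) by (simp add: continuous_on_eq_continuous_at)
  then obtain d where d: "0 < d" "\<And>x. \<bar>x - t\<bar> < d \<Longrightarrow> \<bar>D m x - D m t\<bar> < r / ?P"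
    using r P unfolding continuous_at_eps_delta dist_real_def
    by (metis divide_pos_pos)
  show "\<exists>s>0. \<forall>x. x \<noteq> 0 \<and> norm (x - 0) < s \<longrightarrow>
      norm (Dl m (map ((*) x) cs) (D 0) t / x ^ m - prod_list cs * D m t) < r"
  proof (intro exI[of _ "d / ?S"] conjI allI impI)
    show "0 < d / ?S" using d P by simp
    fix x :: real assume x: "x \<noteq> 0 \<and> norm (x - 0) < d / ?S"
    obtain e where e: "\<bar>e - t\<bar> \<le> sum_list (map abs (map ((*) x) cs))"
      "Dl m (map ((*) x) cs) (D 0) t = prod_list (map ((*) x) cs) * D m e"
      using MVTD[OF assms(1), of "map ((*) x) cs" t] assms(3) by auto
    have "\<bar>e - t\<bar> \<le> \<bar>x\<bar> * sum_list (map abs cs)" using e(1) sum_list_abs_scale[of x cs] by simp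
    also have "\<dots> < d"
    proof -
      have "\<bar>x\<bar> * ?S < d" using x P by (simp add: field_simps)
      thus ?thesis using sum_list_abs_nonneg[of cs] by (smt (verit) mult_left_mono abs_ge_zero)
    qed
    finally have "\<bar>D m e - D m t\<bar> < r / ?P" by (rule d(2))
    have q: "Dl m (map ((*) x) cs) (D 0) t / x ^ m = prod_list cs * D m e"
      using e(2) x assms(3) by (simp add: prod_list_scale)
    have "\<bar>prod_list cs * D m e - prod_list cs * D m t\<bar> = \<bar>prod_list cs\<bar> * \<bar>D m e - D m t\<bar>"
      by (simp add: abs_mult[symmetric] algebra_simps)
    also have "\<dots> \<le> ?P * \<bar>D m e - D m t\<bar>" by (intro mult_right_mono) auto
    also have "\<dots> < ?P * (r / ?P)" using \<open>\<bar>D m e - D m t\<bar> < r / ?P\<close> P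
      by (intro mult_strict_left_mono) auto
    also have "\<dots> = r" using P by simp
    finally show "norm (Dl m (map ((*) x) cs) (D 0) t / x ^ m - prod_list cs * D m t) < r"
      using q by simp
  qed
qed

definition has_lev :: "nat \<Rightarrow> (real \<Rightarrow> real) \<Rightarrow> real list \<Rightarrow> (real \<Rightarrow> real) \<Rightarrow> bool" where
  "has_lev n g cs e \<longleftrightarrow> (\<forall>t. ((\<lambda>s. Dl (length cs) (map ((*) s) cs) g t / s ^ n) \<longlongrightarrow> e t) (at 0))"

lemma list_two_snoc:
  assumes "length cs = Suc (Suc m)"
  obtains cs' a b where "cs = cs' @ [a, b]" "length cs' = m"
proof -
  obtain cs1 b where 1: "cs = cs1 @ [b]" "length cs1 = Suc m"
    using assms by (metis length_Suc_conv_rev)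
  obtain cs' a where 2: "cs1 = cs' @ [a]" "length cs' = m"
    using 1(2) by (metis length_Suc_conv_rev)
  show ?thesis using 1 2 that by simp
qed

lemma Dl_reduce_scaled:
  fixes cs' :: "real list"
  assumes "length cs' = m"
  shows "Dl (Suc (Suc m)) (map ((*) s) (cs' @ [a, b])) g t =
     Dl (Suc m) (map ((*) s) (cs' @ [a + b])) g t - Dl (Suc m) (map ((*) s) (cs' @ [a])) g t
     - Dl (Suc m) (map ((*) s) (cs' @ [b])) g t"
proof -
  have "s * (a + b) = s * a + s * b" by (simp add: distrib_left)
  then show ?thesis using Dl_reduce[of "map ((*) s) cs'" m "s * a" "s * b" g t] assms by simp
qed

lemma lev_reduce:
  assumes n: "1 \<le> n"
    and base: "\<And>cs. length cs = n \<Longrightarrow> \<exists>e. has_lev n g cs e \<and> continuous_on UNIV e"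
  shows "length cs = n + k \<Longrightarrow> \<exists>e. has_lev n g cs e \<and> continuous_on UNIV e"
proof (induct k arbitrary: cs)
  case 0 thus ?case using base by simp
next
  case (Suc k)
  obtain m where m: "n + Suc k = Suc (Suc m)" using n by (metis add_Suc_right le_add_diff_inverse add_Suc Suc_pred' not_one_le_zero not_gr_zero)
  obtain cs' a b where cs: "cs = cs' @ [a, b]" "length cs' = m"
    using list_two_snoc[of cs m] Suc.prems m by auto
  obtain e1 where e1: "has_lev n g (cs' @ [a + b]) e1" "continuous_on UNIV e1"
    using Suc.hyps[of "cs' @ [a + b]"] cs m by auto
  obtain e2 where e2: "has_lev n g (cs' @ [a]) e2" "continuous_on UNIV e2"
    using Suc.hyps[of "cs' @ [a]"] cs m by auto
  obtain e3 where e3: "has_lev n g (cs' @ [b]) e3" "continuous_on UNIV e3"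
    using Suc.hyps[of "cs' @ [b]"] cs m by auto
  have "has_lev n g cs (\<lambda>t. e1 t - e2 t - e3 t)"
    unfolding has_lev_def
  proof
    fix t
    have "((\<lambda>s. Dl (Suc m) (map ((*) s) (cs' @ [a + b])) g t / s ^ n
           - Dl (Suc m) (map ((*) s) (cs' @ [a])) g t / s ^ n
           - Dl (Suc m) (map ((*) s) (cs' @ [b])) g t / s ^ n) \<longlongrightarrow> e1 t - e2 t - e3 t) (at 0)"
      using e1(1) e2(1) e3(1) cs(2) unfolding has_lev_def
      by (intro tendsto_diff) auto
    moreover have "(\<lambda>s. Dl (length cs) (map ((*) s) cs) g t / s ^ n) = (\<lambda>s. Dl (Suc m) (map ((*) s) (cs' @ [a + b])) g t / s ^ n
           - Dl (Suc m) (map ((*) s) (cs' @ [a])) g t / s ^ n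
           - Dl (Suc m) (map ((*) s) (cs' @ [b])) g t / s ^ n)"
    proof (intro ext)
      fix s
      have L: "length cs = Suc (Suc m)" using cs by simp
      show "Dl (length cs) (map ((*) s) cs) g t / s ^ n = Dl (Suc m) (map ((*) s) (cs' @ [a + b])) g t / s ^ n
           - Dl (Suc m) (map ((*) s) (cs' @ [a])) g t / s ^ n
           - Dl (Suc m) (map ((*) s) (cs' @ [b])) g t / s ^ n"
        unfolding L unfolding cs(1) Dl_reduce_scaled[OF cs(2)] diff_divide_distrib ..
    qed
    ultimately show "((\<lambda>s. Dl (length cs) (map ((*) s) cs) g t / s ^ n) \<longlongrightarrow> e1 t - e2 t - e3 t) (at 0)"
      by simp
  qed
  moreover have "continuous_on UNIV (\<lambda>t. e1 t - e2 t - e3 t)"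
    using e1 e2 e3 by (intro continuous_intros)
  ultimately show ?case by blast
qed

lemma lev_reduce_val:
  assumes n: "1 \<le> n"
    and base: "\<And>cs. length cs = n \<Longrightarrow> has_lev n g cs (\<lambda>t. prod_list cs * K t)"
  shows "length cs = n + Suc k \<Longrightarrow> has_lev n g cs (\<lambda>t. 0)"
proof (induct k arbitrary: cs)
  case 0
  obtain m where m: "n + Suc 0 = Suc (Suc m)" using n by (metis add_Suc_right add_0_right Suc_pred' not_one_le_zero not_gr_zero)
  obtain cs' a b where cs: "cs = cs' @ [a, b]" "length cs' = m"
    using list_two_snoc[of cs m] 0 m by auto
  have l: "length (cs' @ [x]) = n" for x using cs m by simp
  show ?case unfolding has_lev_def
  proof
    fix t
    have "((\<lambda>s. Dl (Suc m) (map ((*) s) (cs' @ [a + b])) g t / s ^ n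
           - Dl (Suc m) (map ((*) s) (cs' @ [a])) g t / s ^ n
           - Dl (Suc m) (map ((*) s) (cs' @ [b])) g t / s ^ n) \<longlongrightarrow>
           prod_list (cs' @ [a + b]) * K t - prod_list (cs' @ [a]) * K t - prod_list (cs' @ [b]) * K t) (at 0)"
      using base[OF l[of "a+b"]] base[OF l[of a]] base[OF l[of b]] cs(2) unfolding has_lev_def
      by (intro tendsto_diff) auto
    moreover have "prod_list (cs' @ [a + b]) * K t - prod_list (cs' @ [a]) * K t - prod_list (cs' @ [b]) * K t = 0"
      by (simp add: algebra_simps)
    moreover have "(\<lambda>s. Dl (length cs) (map ((*) s) cs) g t / s ^ n) = (\<lambda>s. Dl (Suc m) (map ((*) s) (cs' @ [a + b])) g t / s ^ n
           - Dl (Suc m) (map ((*) s) (cs' @ [a])) g t / s ^ n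
           - Dl (Suc m) (map ((*) s) (cs' @ [b])) g t / s ^ n)"
    proof (intro ext)
      fix s
      have L: "length cs = Suc (Suc m)" using cs by simp
      show "Dl (length cs) (map ((*) s) cs) g t / s ^ n = Dl (Suc m) (map ((*) s) (cs' @ [a + b])) g t / s ^ n
           - Dl (Suc m) (map ((*) s) (cs' @ [a])) g t / s ^ n
           - Dl (Suc m) (map ((*) s) (cs' @ [b])) g t / s ^ n"
        unfolding L unfolding cs(1) Dl_reduce_scaled[OF cs(2)] diff_divide_distrib ..
    qed
    ultimately show "((\<lambda>s. Dl (length cs) (map ((*) s) cs) g t / s ^ n) \<longlongrightarrow> 0) (at 0)"
      by simp
  qed
next
  case (Suc k)
  obtain m where m: "n + Suc (Suc k) = Suc (Suc m)" using n by simp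
  obtain cs' a b where cs: "cs = cs' @ [a, b]" "length cs' = m"
    using list_two_snoc[of cs m] Suc.prems m by auto
  have l: "length (cs' @ [x]) = n + Suc k" for x using cs m by simp
  show ?case unfolding has_lev_def
  proof
    fix t
    have "((\<lambda>s. Dl (Suc m) (map ((*) s) (cs' @ [a + b])) g t / s ^ n
           - Dl (Suc m) (map ((*) s) (cs' @ [a])) g t / s ^ n
           - Dl (Suc m) (map ((*) s) (cs' @ [b])) g t / s ^ n) \<longlongrightarrow> 0 - 0 - 0) (at 0)"
      using Suc.hyps[OF l[of "a+b"]] Suc.hyps[OF l[of a]] Suc.hyps[OF l[of b]] cs(2) unfolding has_lev_def
      by (intro tendsto_diff) auto
    moreover have "(\<lambda>s. Dl (length cs) (map ((*) s) cs) g t / s ^ n) = (\<lambda>s. Dl (Suc m) (map ((*) s) (cs' @ [a + b])) g t / s ^ n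
           - Dl (Suc m) (map ((*) s) (cs' @ [a])) g t / s ^ n
           - Dl (Suc m) (map ((*) s) (cs' @ [b])) g t / s ^ n)"
    proof (intro ext)
      fix s
      have L: "length cs = Suc (Suc m)" using cs by simp
      show "Dl (length cs) (map ((*) s) cs) g t / s ^ n = Dl (Suc m) (map ((*) s) (cs' @ [a + b])) g t / s ^ n
           - Dl (Suc m) (map ((*) s) (cs' @ [a])) g t / s ^ n
           - Dl (Suc m) (map ((*) s) (cs' @ [b])) g t / s ^ n"
        unfolding L unfolding cs(1) Dl_reduce_scaled[OF cs(2)] diff_divide_distrib ..
    qed
    ultimately show "((\<lambda>s. Dl (length cs) (map ((*) s) cs) g t / s ^ n) \<longlongrightarrow> 0) (at 0)"
      by simp
  qed
qed

definition appP :: "real \<Rightarrow> real poly \<Rightarrow> real \<Rightarrow> (real \<Rightarrow> real) \<Rightarrow> real \<Rightarrow> real" where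
  "appP s p d g t = (\<Sum>i\<le>degree p. coeff p i * g (t + (real i - d) * s))"

lemma appP_bound:
  "degree p \<le> N \<Longrightarrow> appP s p d g t = (\<Sum>i\<le>N. coeff p i * g (t + (real i - d) * s))"
  unfolding appP_def by (rule sum.mono_neutral_left) (auto simp: coeff_eq_0)

lemma appP_0[simp]: "appP s 0 d g t = 0"
  by (simp add: appP_def)

lemma appP_pCons: "appP s (pCons a p) d g t = a * g (t - d * s) + appP s p d g (t + s)"
proof -
  have "appP s (pCons a p) d g t = (\<Sum>i\<le>Suc (degree p). coeff (pCons a p) i * g (t + (real i - d) * s))"
    by (rule appP_bound) (simp add: degree_pCons_le)
  also have "\<dots> = a * g (t - d * s) + (\<Sum>i\<le>degree p. coeff p i * g (t + (real (Suc i) - d) * s))"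
    by (subst sum.atMost_Suc_shift) simp
  also have "(\<Sum>i\<le>degree p. coeff p i * g (t + (real (Suc i) - d) * s)) = appP s p d g (t + s)"
    unfolding appP_def by (intro sum.cong refl) (simp add: algebra_simps)
  finally show ?thesis .
qed

lemma appP_add: "appP s (p + q) d g t = appP s p d g t + appP s q d g t"
proof -
  let ?N = "max (degree p) (degree q)"
  have "appP s (p + q) d g t = (\<Sum>i\<le>?N. coeff (p + q) i * g (t + (real i - d) * s))"
    by (rule appP_bound) (simp add: degree_add_le)
  also have "\<dots> = (\<Sum>i\<le>?N. coeff p i * g (t + (real i - d) * s)) + (\<Sum>i\<le>?N. coeff q i * g (t + (real i - d) * s))"
    by (simp add: sum.distrib distrib_right)
  also have "\<dots> = appP s p d g t + appP s q d g t"
    by (simp add: appP_bound[symmetric])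
  finally show ?thesis .
qed

lemma appP_smult: "appP s (smult c p) d g t = c * appP s p d g t"
proof -
  have "appP s (smult c p) d g t = (\<Sum>i\<le>degree p. coeff (smult c p) i * g (t + (real i - d) * s))"
    by (rule appP_bound) simp
  thus ?thesis by (simp add: appP_def sum_distrib_left mult_ac)
qed

lemma appP_minus: "appP s (- p) d g t = - appP s p d g t"
  using appP_smult[of s "-1" p d g t] by simp

lemma appP_diff: "appP s (p - q) d g t = appP s p d g t - appP s q d g t"
  using appP_add[of s p "-q" d g t] appP_minus[of s q d g t] by simp

lemma appP_shift: "appP s p (d - 1) g t = appP s p d g (t + s)"
  unfolding appP_def by (intro sum.cong refl) (simp add: algebra_simps)

lemma appP_X: "appP s (pCons 0 p) d g t = appP s p (d - 1) g t"
  by (simp add: appP_pCons appP_shift)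

lemma appP_monom: "appP s (monom 1 m * p) (d + real m) g t = appP s p d g t"
proof (induct m arbitrary: d)
  case 0 thus ?case by simp
next
  case (Suc m)
  have "monom 1 (Suc m) * p = pCons 0 (monom 1 m * p)"
    by (simp add: monom_Suc)
  hence "appP s (monom 1 (Suc m) * p) (d + real (Suc m)) g t = appP s (monom 1 m * p) (d + real m) g t"
    by (simp add: appP_X algebra_simps)
  thus ?case using Suc by simp
qed

lemma appP_lin: "appP s p d (\<lambda>x. a * g x + b * h x) t = a * appP s p d g t + b * appP s p d h t"
  unfolding appP_def by (simp add: sum.distrib sum_distrib_left algebra_simps)

lemma appP_gdiff: "appP s p d (\<lambda>x. g x - h x) t = appP s p d g t - appP s p d h t"
  using appP_lin[of s p d 1 g "-1" h t] by simp

lemma appP_gadd: "appP s p d (\<lambda>x. g x + h x) t = appP s p d g t + appP s p d h t"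
  using appP_lin[of s p d 1 g 1 h t] by simp

lemma appP_gcmult: "appP s p d (\<lambda>x. a * g x) t = a * appP s p d g t"
  using appP_lin[of s p d a g 0 g t] by simp

lemma appP_scale2: "appP (2 * s) p d g t = appP s (p \<circ>\<^sub>p [:0, 0, 1:]) (2 * d) g t"
proof (induct p arbitrary: t rule: pCons_induct)
  case 0 thus ?case by simp
next
  case (pCons a p)
  have c: "pCons a p \<circ>\<^sub>p [:0, 0, 1:] = pCons a (pCons 0 (p \<circ>\<^sub>p [:0, 0, 1:]))"
    by (simp add: pcompose_pCons)
  show ?case unfolding c appP_pCons appP_X pCons(2)[of "t + 2 * s"]
    by (simp add: appP_shift algebra_simps)
qed

lemma appP_Xm1pow: "appP s ([:-1, 1:] ^ n) d g t = Dl n (replicate n s) g (t - d * s)"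
proof (induct n arbitrary: t)
  case 0 thus ?case by (simp add: appP_def)
next
  case (Suc n)
  have e: "[:-1, 1::real:] ^ Suc n = - ([:-1, 1:] ^ n) + pCons 0 ([:-1, 1:] ^ n)"
    by (rule poly_eqI) (simp add: mult_pCons_left)
  have c: "\<And>x. Dl n (replicate (Suc n) s) g x = Dl n (replicate n s) g x"
    by (rule Dl_cong) (simp add: nth_Cons split: nat.split)
  have nn: "replicate (Suc n) s ! n = s" by (simp del: replicate_Suc)
  show ?case unfolding e appP_add appP_minus appP_X appP_shift Suc Dl_Suc[of n "replicate (Suc n) s"] c nn
    by (simp add: algebra_simps)
qed

lemma appP_mult_pCons:
  "appP s ([:-1, 1:] ^ n * pCons c Q) d g t = c * appP s ([:-1, 1:] ^ n) d g t + appP s ([:-1, 1:] ^ n * Q) (d - 1) g t"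
  by (simp add: mult_pCons_right appP_add appP_smult appP_X)

lemma Dl_rep_shift:
  fixes s d :: real
  shows "Dl n (replicate n s) g (t - d * s) = Dl n (map ((*) s) (replicate n 1)) g t
     + Dl (Suc n) (map ((*) s) (replicate n 1 @ [- d])) g t"
proof -
  have L1: "map ((*) s) (replicate n 1) = replicate n s" by simp
  have L2: "map ((*) s) (replicate n 1 @ [- d]) = replicate n s @ [s * - d]" by simp
  have c: "\<And>x. Dl n (replicate n s @ [s * - d]) g x = Dl n (replicate n s) g x"
    by (rule Dl_cong) (simp add: nth_append)
  have "Dl (Suc n) (replicate n s @ [s * - d]) g t = Dl n (replicate n s) g (t + s * - d) - Dl n (replicate n s) g t"
    unfolding Dl_Suc c by (simp add: nth_append)
  thus ?thesis unfolding L1 L2 by (simp add: algebra_simps)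
qed

lemma LXQ_exists:
  assumes n: "1 \<le> n"
    and base: "\<And>cs. length cs = n \<Longrightarrow> \<exists>e. has_lev n g cs e \<and> continuous_on UNIV e"
  shows "\<exists>e. (\<forall>t. ((\<lambda>s. appP s ([:-1, 1:] ^ n * Q) d g t / s ^ n) \<longlongrightarrow> e t) (at 0)) \<and> continuous_on UNIV e"
proof (induct Q arbitrary: d rule: pCons_induct)
  case 0 thus ?case by (intro exI[of _ "\<lambda>t. 0"]) simp
next
  case (pCons c Q)
  obtain eQ where eQ: "\<forall>t. ((\<lambda>s. appP s ([:-1, 1:] ^ n * Q) (d - 1) g t / s ^ n) \<longlongrightarrow> eQ t) (at 0)"
    "continuous_on UNIV eQ" using pCons(2)[of "d - 1"] by blast
  obtain e1 where e1: "has_lev n g (replicate n 1) e1" "continuous_on UNIV e1"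
    using base[of "replicate n 1"] by auto
  obtain e2 where e2: "has_lev n g (replicate n 1 @ [- d]) e2" "continuous_on UNIV e2"
    using lev_reduce[OF n base, of "replicate n 1 @ [- d]" 1] by auto
  have len: "length (replicate n (1::real) @ [- d]) = Suc n" by simp
  have h1: "\<And>t. ((\<lambda>s. Dl n (map ((*) s) (replicate n 1)) g t / s ^ n) \<longlongrightarrow> e1 t) (at 0)"
    using e1(1) unfolding has_lev_def length_replicate by blast
  have h2: "\<And>t. ((\<lambda>s. Dl (Suc n) (map ((*) s) (replicate n 1 @ [- d])) g t / s ^ n) \<longlongrightarrow> e2 t) (at 0)"
    using e2(1) unfolding has_lev_def len by blast
  have feq: "\<And>t. (\<lambda>s. appP s ([:-1, 1:] ^ n * pCons c Q) d g t / s ^ n) =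
     (\<lambda>s. c * (Dl n (map ((*) s) (replicate n 1)) g t / s ^ n
        + Dl (Suc n) (map ((*) s) (replicate n 1 @ [- d])) g t / s ^ n)
        + appP s ([:-1, 1:] ^ n * Q) (d - 1) g t / s ^ n)"
    by (intro ext) (simp only: appP_mult_pCons appP_Xm1pow Dl_rep_shift add_divide_distrib times_divide_eq_right[symmetric])
  show ?case
  proof (intro exI[of _ "\<lambda>t. c * (e1 t + e2 t) + eQ t"] conjI allI)
    fix t
    show "((\<lambda>s. appP s ([:-1, 1:] ^ n * pCons c Q) d g t / s ^ n) \<longlongrightarrow> c * (e1 t + e2 t) + eQ t) (at 0)"
      unfolding feq using h1 h2 eQ(1) by (intro tendsto_intros) auto
  next
    show "continuous_on UNIV (\<lambda>t. c * (e1 t + e2 t) + eQ t)"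
      using e1(2) e2(2) eQ(2) by (intro continuous_intros)
  qed
qed

lemma LXQ_val:
  assumes n: "1 \<le> n"
    and base: "\<And>cs. length cs = n \<Longrightarrow> has_lev n g cs (\<lambda>t. prod_list cs * K t)"
  shows "((\<lambda>s. appP s ([:-1, 1:] ^ n * Q) d g t / s ^ n) \<longlongrightarrow> poly Q 1 * K t) (at 0)"
proof (induct Q arbitrary: d rule: pCons_induct)
  case 0 thus ?case by simp
next
  case (pCons c Q)
  have e1: "has_lev n g (replicate n 1) (\<lambda>t. K t)"
    using base[of "replicate n 1"] by simp
  have e2: "has_lev n g (replicate n 1 @ [- d]) (\<lambda>t. 0)"
    using lev_reduce_val[OF n base, of "replicate n 1 @ [- d]" 0] by simp
  have len: "length (replicate n (1::real) @ [- d]) = Suc n" by simp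
  have h1: "((\<lambda>s. Dl n (map ((*) s) (replicate n 1)) g t / s ^ n) \<longlongrightarrow> K t) (at 0)"
    using e1 unfolding has_lev_def length_replicate by blast
  have h2: "((\<lambda>s. Dl (Suc n) (map ((*) s) (replicate n 1 @ [- d])) g t / s ^ n) \<longlongrightarrow> 0) (at 0)"
    using e2 unfolding has_lev_def len by blast
  have feq: "(\<lambda>s. appP s ([:-1, 1:] ^ n * pCons c Q) d g t / s ^ n) =
     (\<lambda>s. c * (Dl n (map ((*) s) (replicate n 1)) g t / s ^ n
        + Dl (Suc n) (map ((*) s) (replicate n 1 @ [- d])) g t / s ^ n)
        + appP s ([:-1, 1:] ^ n * Q) (d - 1) g t / s ^ n)"
    by (intro ext) (simp only: appP_mult_pCons appP_Xm1pow Dl_rep_shift add_divide_distrib times_divide_eq_right[symmetric])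
  have "((\<lambda>s. c * (Dl n (map ((*) s) (replicate n 1)) g t / s ^ n
        + Dl (Suc n) (map ((*) s) (replicate n 1 @ [- d])) g t / s ^ n)
        + appP s ([:-1, 1:] ^ n * Q) (d - 1) g t / s ^ n) \<longlongrightarrow> c * (K t + 0) + poly Q 1 * K t) (at 0)"
    using h1 h2 pCons(2)[of "d - 1"] by (intro tendsto_intros) auto
  thus ?case unfolding feq by (simp add: algebra_simps)
qed

lemma antideriv:
  fixes h :: "real \<Rightarrow> real"
  assumes "continuous_on UNIV h"
  shows "\<exists>F. (\<forall>x. (F has_real_derivative h x) (at x)) \<and> F 0 = c"
proof -
  have "\<exists>F. \<forall>x :: real. (-\<infinity>::ereal) < x \<longrightarrow> x < \<infinity> \<longrightarrow> (F has_vector_derivative h x) (at x)"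
    by (rule einterval_antiderivative) (use assms in \<open>auto simp: continuous_on_eq_continuous_at\<close>)
  then obtain F where F: "\<And>x. (F has_vector_derivative h x) (at x)" by auto
  have "\<And>x. ((\<lambda>x. F x - F 0 + c) has_real_derivative h x) (at x)"
    using F by (auto simp: has_real_derivative_iff_has_vector_derivative intro!: derivative_eq_intros)
  thus ?thesis by (intro exI[of _ "\<lambda>x. F x - F 0 + c"]) auto
qed

lemma tower:
  fixes h :: "real \<Rightarrow> real"
  assumes "continuous_on UNIV h"
  shows "\<exists>F. F n = h \<and> Cfam n F \<and> (\<forall>j\<le>n. continuous_on UNIV (F j)) \<and> (\<forall>j<n. F j 0 = cs j)"
proof (induct n arbitrary: cs)
  case 0 thus ?case using assms by (intro exI[of _ "\<lambda>j. h"]) (simp add: Cfam_def)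
next
  case (Suc n)
  obtain F where F: "F n = h" "Cfam n F" "\<forall>j\<le>n. continuous_on UNIV (F j)" "\<forall>j<n. F j 0 = cs (Suc j)"
    using Suc[of "\<lambda>j. cs (Suc j)"] by blast
  obtain G where G: "\<And>x. (G has_real_derivative F 0 x) (at x)" "G 0 = cs 0"
    using antideriv[of "F 0" "cs 0"] F(3) by auto
  let ?H = "\<lambda>j. case j of 0 \<Rightarrow> G | Suc j \<Rightarrow> F j"
  have "Cfam (Suc n) ?H"
    unfolding Cfam_def
  proof (intro allI impI)
    fix j x assume j: "j < Suc n"
    show "(?H j has_real_derivative ?H (Suc j) x) (at x)"
    proof (cases j)
      case 0 thus ?thesis using G(1) by simp
    next
      case (Suc j') thus ?thesis using F(2) j by (simp add: Cfam_def)
    qed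
  qed
  moreover have "\<forall>j\<le>Suc n. continuous_on UNIV (?H j)"
  proof (intro allI impI)
    fix j assume j: "j \<le> Suc n"
    show "continuous_on UNIV (?H j)"
    proof (cases j)
      case 0
      have "continuous_on UNIV G"
        using G(1) by (meson DERIV_continuous continuous_at_imp_continuous_on)
      thus ?thesis using 0 by simp
    next
      case (Suc j') thus ?thesis using F(3) j by simp
    qed
  qed
  moreover have "\<forall>j<Suc n. ?H j 0 = cs j"
    using F(4) G(2) by (auto split: nat.split)
  ultimately show ?case using F(1) by (intro exI[of _ ?H]) simp
qed

lemma doubling:
  fixes u :: "real \<Rightarrow> real"
  assumes u0: "(u \<longlongrightarrow> 0) (at 0)"
    and ud: "((\<lambda>s. (u (2 * s) - u s) / s ^ 2) \<longlongrightarrow> l) (at 0)"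
  shows "((\<lambda>s. u s / s ^ 2) \<longlongrightarrow> l / 3) (at 0)"
proof (rule LIM_I)
  fix r :: real assume r: "0 < r"
  obtain d where d: "0 < d" "\<And>x. x \<noteq> 0 \<Longrightarrow> norm (x - 0) < d \<Longrightarrow> norm ((u (2 * x) - u x) / x ^ 2 - l) < r"
    using LIM_D[OF ud r] by blast
  show "\<exists>s>0. \<forall>x. x \<noteq> 0 \<and> norm (x - 0) < s \<longrightarrow> norm (u x / x ^ 2 - l / 3) < r"
  proof (intro exI[of _ d] conjI allI impI)
    show "0 < d" by fact
    fix s :: real assume s: "s \<noteq> 0 \<and> norm (s - 0) < d"
    have step: "\<bar>u (2 * x) - u x - l * x ^ 2\<bar> \<le> r * x ^ 2" if "x \<noteq> 0" "\<bar>x\<bar> < d" for x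
    proof -
      have "\<bar>(u (2 * x) - u x) / x ^ 2 - l\<bar> < r" using d(2)[of x] that by simp
      hence "\<bar>(u (2 * x) - u x - l * x ^ 2) / x ^ 2\<bar> \<le> r"
        using that by (simp add: diff_divide_distrib)
      thus ?thesis using that by (simp add: abs_div divide_le_eq)
    qed
    have fin: "\<bar>u s - u (s / 2 ^ k) - l * s ^ 2 * (1 - (1/4) ^ k) / 3\<bar> \<le> r * s ^ 2 * (1 - (1/4) ^ k) / 3" for k
    proof (induct k)
      case 0 thus ?case by simp
    next
      case (Suc k)
      define x where "x = s / 2 ^ Suc k"
      define y where "y = s / 2 ^ k"
      define q where "q = (1/4::real) ^ k"
      have pq: "(1/4::real) ^ Suc k = q / 4" by (simp add: q_def)
      have x: "x \<noteq> 0" "\<bar>x\<bar> < d"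
      proof -
        show "x \<noteq> 0" using s by (simp add: x_def)
        have p: "(1::real) \<le> 2 ^ Suc k" by (rule one_le_power) simp
        have "\<bar>x\<bar> = \<bar>s\<bar> / 2 ^ Suc k" by (simp add: abs_div x_def)
        also have "\<dots> \<le> \<bar>s\<bar> / 1" by (rule divide_left_mono) (use p in auto)
        finally have "\<bar>x\<bar> \<le> \<bar>s\<bar>" by simp
        thus "\<bar>x\<bar> < d" using s by simp
      qed
      have e: "2 * x = y" by (simp add: x_def y_def field_simps)
      have P: "\<And>m. ((2::real) ^ m) ^ 2 = 4 ^ m"
        by (induct_tac m) (simp_all add: power2_eq_square algebra_simps)
      have "x ^ 2 = s ^ 2 / (2 ^ Suc k) ^ 2" unfolding x_def by (rule power_divide)
      also have "\<dots> = s ^ 2 / 4 ^ Suc k" by (simp only: P)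
      also have "\<dots> = s ^ 2 * (1/4) ^ Suc k" by (simp add: power_one_over)
      finally have "x ^ 2 = s ^ 2 * (1/4) ^ Suc k" .
      hence x2: "x ^ 2 = s ^ 2 * (q / 4)" by (simp only: pq)
      have st: "\<bar>u y - u x - l * x ^ 2\<bar> \<le> r * x ^ 2"
        using step[OF x] e by simp
      have IH: "\<bar>u s - u y - l * s ^ 2 * (1 - q) / 3\<bar> \<le> r * s ^ 2 * (1 - q) / 3"
        using Suc by (simp add: y_def q_def)
      have eq: "u s - u x - l * s ^ 2 * (1 - q / 4) / 3 = (u s - u y - l * s ^ 2 * (1 - q) / 3) + (u y - u x - l * x ^ 2)"
        unfolding x2 by (simp add: field_simps)
      have "\<bar>u s - u x - l * s ^ 2 * (1 - q / 4) / 3\<bar> \<le> r * s ^ 2 * (1 - q) / 3 + r * x ^ 2"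
        unfolding eq by (rule order_trans[OF abs_triangle_ineq add_mono[OF IH st]])
      also have "\<dots> = r * s ^ 2 * (1 - q / 4) / 3"
        unfolding x2 by (simp add: field_simps)
      finally show ?case by (simp add: x_def pq q_def)
    qed
    have seq0: "(\<lambda>k. s / 2 ^ k) \<longlonglongrightarrow> 0"
      by (intro LIMSEQ_divide_realpow_zero) auto
    have "(\<lambda>k. u (s / 2 ^ k)) \<longlonglongrightarrow> 0"
    proof -
      have "(u \<circ> (\<lambda>k. s / 2 ^ k)) \<longlonglongrightarrow> 0"
        using u0 seq0 s unfolding tendsto_at_iff_sequentially by auto
      thus ?thesis by (simp add: comp_def)
    qed
    hence lim: "(\<lambda>k. \<bar>u s - u (s / 2 ^ k) - l * s ^ 2 * (1 - (1/4) ^ k) / 3\<bar>) \<longlonglongrightarrow> \<bar>u s - 0 - l * s ^ 2 * (1 - 0) / 3\<bar>"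
      by (intro tendsto_intros LIMSEQ_realpow_zero) auto
    have "\<bar>u s - l * s ^ 2 / 3\<bar> \<le> r * s ^ 2 / 3"
    proof (rule LIMSEQ_le_const2[OF lim[simplified]])
      show "\<exists>N. \<forall>k\<ge>N. \<bar>u s - u (s / 2 ^ k) - l * s ^ 2 * (1 - (1/4) ^ k) / 3\<bar> \<le> r * s ^ 2 / 3"
      proof (intro exI allI impI)
        fix k :: nat
        have "r * s ^ 2 * (1 - (1/4) ^ k) / 3 \<le> r * s ^ 2 / 3"
          using r by (simp add: divide_right_mono mult_left_le)
        thus "\<bar>u s - u (s / 2 ^ k) - l * s ^ 2 * (1 - (1/4) ^ k) / 3\<bar> \<le> r * s ^ 2 / 3"
          using fin[of k] by linarith
      qed
    qed
    hence "\<bar>u s / s ^ 2 - l / 3\<bar> \<le> r / 3"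
      using s by (simp add: field_simps abs_div divide_le_eq)
    thus "norm (u s / s ^ 2 - l / 3) < r" using r by simp
  qed
qed

lemma chord_le:
  fixes Y :: "real \<Rightarrow> real"
  assumes cY: "continuous_on UNIV Y"
    and nomax: "\<And>e c0 c1 t d. 0 < e \<Longrightarrow> 0 < d \<Longrightarrow>
       (\<forall>x. \<bar>x - t\<bar> < d \<longrightarrow> Y x - c0 - c1 * x + e * x ^ 2 \<le> Y t - c0 - c1 * t + e * t ^ 2) \<Longrightarrow> False"
    and ab: "a < b" and x0: "a < x0" "x0 < b"
  shows "Y x0 \<le> Y a + (Y b - Y a) / (b - a) * (x0 - a)"
proof (rule ccontr)
  define m where "m = (Y b - Y a) / (b - a)"
  assume "\<not> Y x0 \<le> Y a + (Y b - Y a) / (b - a) * (x0 - a)"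
  hence eta: "0 < Y x0 - (Y a + m * (x0 - a))" by (simp add: m_def)
  define eta where "eta = Y x0 - (Y a + m * (x0 - a))"
  define e where "e = eta / ((b - a) ^ 2 + 1)"
  have den: "0 < (b - a) ^ 2 + 1" by (metis add_nonneg_pos zero_le_power2 zero_less_one)
  have e: "0 < e" unfolding e_def eta_def by (rule divide_pos_pos[OF eta den])
  define Z where "Z x = Y x - (Y a + m * (x - a)) + e * ((x - a) * (x - b))" for x
  have cZ: "continuous_on {a..b} Z"
    unfolding Z_def using cY by (intro continuous_intros) (auto intro: continuous_on_subset)
  obtain t where t: "t \<in> {a..b}" "\<And>y. y \<in> {a..b} \<Longrightarrow> Z y \<le> Z t"
    using continuous_attains_sup[OF compact_Icc _ cZ] ab by auto
  have Za: "Z a = 0" and Zb: "Z b = 0" using ab by (simp_all add: Z_def m_def field_simps)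
  have "(x0 - a) * (b - x0) \<le> (b - a) ^ 2"
  proof -
    have "(x0 - a) * (b - x0) \<le> (b - a) * (b - a)"
      using x0 by (intro mult_mono) auto
    thus ?thesis by (simp add: power2_eq_square)
  qed
  hence "e * ((x0 - a) * (b - x0)) \<le> e * ((b - a) ^ 2)" using e by (intro mult_left_mono) auto
  also have "\<dots> < eta"
  proof -
    have "e * ((b - a) ^ 2 + 1) = eta" using den by (simp add: e_def)
    thus ?thesis using e by (simp add: algebra_simps)
  qed
  finally have "0 < Z x0" by (simp add: Z_def eta_def algebra_simps)
  hence Zt: "0 < Z t" using t(2)[of x0] x0 by simp
  have tab: "a < t" "t < b" using Zt t(1) Za Zb by (auto simp: order.order_iff_strict)
  define d where "d = min (t - a) (b - t)"
  have d: "0 < d" using tab by (simp add: d_def)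
  have "\<forall>x. \<bar>x - t\<bar> < d \<longrightarrow> Y x - (Y a - m * a + e * a * b) - (m + e * (a + b)) * x + e * x ^ 2
       \<le> Y t - (Y a - m * a + e * a * b) - (m + e * (a + b)) * t + e * t ^ 2"
  proof (intro allI impI)
    fix x assume "\<bar>x - t\<bar> < d"
    hence "x \<in> {a..b}" by (auto simp: d_def abs_less_iff)
    hence "Z x \<le> Z t" by (rule t(2))
    thus "Y x - (Y a - m * a + e * a * b) - (m + e * (a + b)) * x + e * x ^ 2
       \<le> Y t - (Y a - m * a + e * a * b) - (m + e * (a + b)) * t + e * t ^ 2"
      by (simp add: Z_def algebra_simps power2_eq_square)
  qed
  thus False using nomax[OF e d] by blast
qed

lemma MP0:
  fixes Y :: "real \<Rightarrow> real"
  assumes cY: "continuous_on UNIV Y"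
    and nomax: "\<And>e c0 c1 t d. 0 < e \<Longrightarrow> 0 < d \<Longrightarrow>
       (\<forall>x. \<bar>x - t\<bar> < d \<longrightarrow> Y x - c0 - c1 * x + e * x ^ 2 \<le> Y t - c0 - c1 * t + e * t ^ 2) \<Longrightarrow> False"
    and nomin: "\<And>e c0 c1 t d. 0 < e \<Longrightarrow> 0 < d \<Longrightarrow>
       (\<forall>x. \<bar>x - t\<bar> < d \<longrightarrow> Y x - c0 - c1 * x - e * x ^ 2 \<ge> Y t - c0 - c1 * t - e * t ^ 2) \<Longrightarrow> False"
  shows "Y x = Y 0 + (Y 1 - Y 0) * x"
proof -
  have nomax': "False" if "0 < e" "0 < d"
       "\<forall>x. \<bar>x - t\<bar> < d \<longrightarrow> - Y x - c0 - c1 * x + e * x ^ 2 \<le> - Y t - c0 - c1 * t + e * t ^ 2"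
     for e c0 c1 t d
  proof -
    have "\<forall>x. \<bar>x - t\<bar> < d \<longrightarrow> Y x - (- c0) - (- c1) * x - e * x ^ 2 \<ge> Y t - (- c0) - (- c1) * t - e * t ^ 2"
      using that(3) by (auto simp: algebra_simps)
    thus False using nomin[OF that(1,2)] by blast
  qed
  have cY': "continuous_on UNIV (\<lambda>x. - Y x)" using cY by (intro continuous_intros)
  have eq: "Y x0 = Y a + (Y b - Y a) / (b - a) * (x0 - a)" if "a < b" "a < x0" "x0 < b" for a b x0
  proof -
    define M where "M = (Y b - Y a) / (b - a)"
    have h1: "Y x0 \<le> Y a + M * (x0 - a)"
      unfolding M_def by (rule chord_le[OF cY nomax that])
    have A: "- Y x0 \<le> - Y a + (- Y b - - Y a) / (b - a) * (x0 - a)"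
      by (rule chord_le[where Y="\<lambda>x. - Y x", OF cY' nomax' that])
    have B: "(- Y b - - Y a) / (b - a) = - M"
    proof -
      have "(- Y b - - Y a) = - (Y b - Y a)" by simp
      thus ?thesis unfolding M_def by (simp only: minus_divide_left)
    qed
    have h2: "- Y x0 \<le> - Y a + (- M) * (x0 - a)" using A unfolding B .
    show ?thesis using h1 h2 unfolding M_def[symmetric] by linarith
  qed
  define a where "a = - \<bar>x\<bar> - 1"
  define b where "b = \<bar>x\<bar> + 2"
  have ab: "a < b" "a < 0" "0 < b" "a < 1" "1 < b" "a < x" "x < b" by (auto simp: a_def b_def)
  define m where "m = (Y b - Y a) / (b - a)"
  have "Y 0 = Y a + m * (0 - a)" "Y 1 = Y a + m * (1 - a)" "Y x = Y a + m * (x - a)"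
    using eq[of a b 0] eq[of a b 1] eq[of a b x] ab by (simp_all add: m_def)
  hence "Y 1 - Y 0 = m" "Y x = Y 0 + m * x" by (simp_all add: algebra_simps)
  thus ?thesis by simp
qed

lemma deriv_const_affine:
  fixes f :: "real \<Rightarrow> real"
  assumes "\<And>x. (f has_real_derivative c) (at x)"
  shows "f x = f 0 + c * x"
proof -
  have "\<forall>x. ((\<lambda>x. f x - c * x) has_real_derivative 0) (at x)"
    using assms by (auto intro!: derivative_eq_intros)
  hence "(\<lambda>x. f x - c * x) x = (\<lambda>x. f x - c * x) 0"
    by (rule DERIV_isconst_all)
  thus ?thesis by simp
qed

lemma Cfam_diff:
  assumes "Cfam n F" "Cfam n G"
  shows "Cfam n (\<lambda>j x. a * F j x + b * G j x)"
  using assms unfolding Cfam_def by (auto intro!: derivative_eq_intros)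

lemma CfamD: "Cfam n F \<Longrightarrow> j < n \<Longrightarrow> (F j has_real_derivative F (Suc j) x) (at x)"
  by (simp add: Cfam_def)

lemma smooth_lev:
  assumes "Cfam n G" "continuous_on UNIV (G n)" "length cs = n"
  shows "has_lev n (G 0) cs (\<lambda>t. prod_list cs * G n t)"
  unfolding has_lev_def using dprod_limit_smooth[OF assms] assms(3) by simp

lemma step_lemma:
  fixes D :: "nat \<Rightarrow> real \<Rightarrow> real" and pB Q :: "real poly"
  assumes nL: "n = L + 2"
    and A1: "pB \<circ>\<^sub>p [:0, 0, 1:] - smult (2 ^ L) (monom 1 dB * pB) = [:-1, 1:] ^ n * Q"
    and A2: "0 < poly Q 1"
    and w: "0 < w" and R: "0 \<le> R"
    and A3: "\<And>G s t. Cfam L G \<Longrightarrow> s \<noteq> 0 \<Longrightarrow> \<exists>x1 x2. \<bar>x1 - t\<bar> \<le> R * \<bar>s\<bar> \<and> \<bar>x2 - t\<bar> \<le> R * \<bar>s\<bar> \<and>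
            appP s pB (real dB) (G 0) t = s ^ L * (w * (G L x1 + G L x2))"
    and CD: "Cfam (L + 1) D" and contD: "\<And>j. j \<le> L + 1 \<Longrightarrow> continuous_on UNIV (D j)"
    and lev: "\<And>cs. length cs = n \<Longrightarrow> \<exists>e. has_lev n (D 0) cs e \<and> continuous_on UNIV e"
  shows "\<exists>h. continuous_on UNIV h \<and> (\<forall>x. (D (L + 1) has_real_derivative h x) (at x))"
proof -
  define P where "P = [:-1, 1:] ^ n * Q"
  define dd where "dd = real dB"
  have n1: "1 \<le> n" using nL by simp
  have opP: "appP s P (2 * dd) g t = appP (2 * s) pB dd g t - 2 ^ L * appP s pB dd g t" for s g t
  proof -
    have "appP s P (2 * dd) g t = appP s (pB \<circ>\<^sub>p [:0, 0, 1:]) (2 * dd) g t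
        - 2 ^ L * appP s (monom 1 dB * pB) (dd + real dB) g t"
      unfolding P_def A1[symmetric] appP_diff appP_smult by (simp add: dd_def)
    moreover have "appP s (monom 1 dB * pB) (dd + real dB) g t = appP s pB dd g t"
      by (rule appP_monom)
    ultimately show ?thesis by (simp add: appP_scale2 dd_def)
  qed
  have Psmooth: "((\<lambda>s. appP s P (2 * dd) (G 0) t / s ^ n) \<longlongrightarrow> poly Q 1 * G n t) (at 0)"
    if "Cfam n G" "continuous_on UNIV (G n)" for G t
    unfolding P_def by (rule LXQ_val[OF n1 smooth_lev[OF that]])
  define U where "U G t s = appP s pB dd (G 0) t / s ^ L - 2 * w * G L t" for G :: "nat \<Rightarrow> real \<Rightarrow> real" and t s
  have U0: "(U G t \<longlongrightarrow> 0) (at 0)" if G: "Cfam L G" "continuous_on UNIV (G L)" for G t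
  proof (rule LIM_I)
    fix r :: real assume r: "0 < r"
    have "isCont (G L) t" using G(2) by (simp add: continuous_on_eq_continuous_at)
    then obtain d where d: "0 < d" "\<And>x. \<bar>x - t\<bar> < d \<Longrightarrow> \<bar>G L x - G L t\<bar> < r / (2 * w)"
      using r w unfolding continuous_at_eps_delta dist_real_def by (metis divide_pos_pos mult_pos_pos zero_less_numeral)
    show "\<exists>s>0. \<forall>x. x \<noteq> 0 \<and> norm (x - 0) < s \<longrightarrow> norm (U G t x - 0) < r"
    proof (intro exI[of _ "d / (R + 1)"] conjI allI impI)
      show "0 < d / (R + 1)" using d R by simp
      fix s :: real assume s: "s \<noteq> 0 \<and> norm (s - 0) < d / (R + 1)"
      obtain x1 x2 where x: "\<bar>x1 - t\<bar> \<le> R * \<bar>s\<bar>" "\<bar>x2 - t\<bar> \<le> R * \<bar>s\<bar>"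
        "appP s pB (real dB) (G 0) t = s ^ L * (w * (G L x1 + G L x2))"
        using A3[OF G(1)] s by blast
      have Rs: "R * \<bar>s\<bar> < d"
      proof -
        have "\<bar>s\<bar> * (R + 1) < d" using s R by (simp add: field_simps)
        thus ?thesis using R by (smt (verit) mult_nonneg_nonneg abs_ge_zero distrib_left mult.commute)
      qed
      have b1: "\<bar>G L x1 - G L t\<bar> < r / (2 * w)" using d(2) x(1) Rs by simp
      have b2: "\<bar>G L x2 - G L t\<bar> < r / (2 * w)" using d(2) x(2) Rs by simp
      have q: "appP s pB dd (G 0) t / s ^ L = w * (G L x1 + G L x2)"
        using x(3) s by (simp add: dd_def)
      have "U G t s = w * (G L x1 - G L t) + w * (G L x2 - G L t)"
        unfolding U_def q by (simp add: algebra_simps)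
      hence "\<bar>U G t s\<bar> \<le> w * \<bar>G L x1 - G L t\<bar> + w * \<bar>G L x2 - G L t\<bar>"
        using w by (simp add: abs_mult) (metis abs_triangle_ineq abs_mult abs_of_pos)
      also have "\<dots> < w * (r / (2 * w)) + w * (r / (2 * w))"
        using b1 b2 w by (intro add_strict_mono mult_strict_left_mono) auto
      also have "\<dots> = r" using w by (simp add: field_simps)
      finally show "norm (U G t s - 0) < r" by simp
    qed
  qed
  have Ud: "((\<lambda>s. (U G t (2 * s) - U G t s) / s ^ 2) \<longlongrightarrow> l / 2 ^ L) (at 0)"
    if "((\<lambda>s. appP s P (2 * dd) (G 0) t / s ^ n) \<longlongrightarrow> l) (at 0)" for G t l
  proof -
    have "(\<lambda>s. (U G t (2 * s) - U G t s) / s ^ 2) = (\<lambda>s. (appP s P (2 * dd) (G 0) t / s ^ n) / 2 ^ L)"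
    proof
      fix s :: real
      show "(U G t (2 * s) - U G t s) / s ^ 2 = (appP s P (2 * dd) (G 0) t / s ^ n) / 2 ^ L"
      proof (cases "s = 0")
        case True thus ?thesis using n1 by (simp add: U_def)
      next
        case False
        thus ?thesis unfolding U_def opP nL
          by (simp add: field_simps power_mult_distrib power2_eq_square)
      qed
    qed
    moreover have "((\<lambda>s. (appP s P (2 * dd) (G 0) t / s ^ n) / 2 ^ L) \<longlongrightarrow> l / 2 ^ L) (at 0)"
      using that by (intro tendsto_divide) auto
    ultimately show ?thesis by simp
  qed
  have Ulim: "((\<lambda>s. U G t s / s ^ 2) \<longlongrightarrow> l / 2 ^ L / 3) (at 0)"
    if "Cfam L G" "continuous_on UNIV (G L)" "((\<lambda>s. appP s P (2 * dd) (G 0) t / s ^ n) \<longlongrightarrow> l) (at 0)" for G t l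
    by (rule doubling[OF U0[OF that(1,2)] Ud[of G t l, OF that(3)]])
  obtain eP where eP: "\<And>t. ((\<lambda>s. appP s P (2 * dd) (D 0) t / s ^ n) \<longlongrightarrow> eP t) (at 0)" "continuous_on UNIV eP"
    using LXQ_exists[where g="D 0" and n=n and Q=Q and d="2 * dd", OF n1 lev] unfolding P_def by blast
  obtain Gm where Gm: "Gm n = (\<lambda>x. eP x / poly Q 1)" "Cfam n Gm" "\<forall>j\<le>n. continuous_on UNIV (Gm j)"
  proof -
    have "continuous_on UNIV (\<lambda>x. eP x / poly Q 1)" using eP(2) A2 by (intro continuous_intros) auto
    from tower[OF this, of n "\<lambda>j. 0"] show ?thesis using that by blast
  qed
  define X where "X j x = D j x - Gm j x" for j x
  have CX: "Cfam (L + 1) X" unfolding X_def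
    using Cfam_diff[OF CD Cfam_mono[OF Gm(2)], of 1 "-1"] nL by simp
  have contX: "continuous_on UNIV (X j)" if "j \<le> L + 1" for j
    unfolding X_def using contD[OF that] Gm(3) that nL by (intro continuous_intros) auto
  have PX: "((\<lambda>s. appP s P (2 * dd) (X 0) t / s ^ n) \<longlongrightarrow> 0) (at 0)" for t
  proof -
    have "((\<lambda>s. appP s P (2 * dd) (D 0) t / s ^ n - appP s P (2 * dd) (Gm 0) t / s ^ n)
         \<longlongrightarrow> eP t - poly Q 1 * Gm n t) (at 0)"
      by (intro tendsto_diff eP(1) Psmooth Gm(2)) (use Gm in auto)
    moreover have "eP t - poly Q 1 * Gm n t = 0" using A2 Gm(1) by simp
    ultimately show ?thesis unfolding X_def appP_gdiff diff_divide_distrib by simp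
  qed
  have noext: False
    if e: "0 < e" and d: "0 < d" and sg: "sg = 1 \<or> sg = -1"
      and hext: "\<forall>x. \<bar>x - t\<bar> < d \<longrightarrow> sg * (X L x - c0 - c1 * x) + e * x ^ 2 \<le> sg * (X L t - c0 - c1 * t) + e * t ^ 2"
    for e d sg t c0 c1
  proof -
    obtain Lf where Lf: "Lf n = (\<lambda>x. 0)" "Cfam n Lf" "\<forall>j\<le>n. continuous_on UNIV (Lf j)"
        "\<forall>j<n. Lf j 0 = (if j = L then c0 else if j = L + 1 then c1 else 0)"
      using tower[of "\<lambda>x. 0" n "\<lambda>j. if j = L then c0 else if j = L + 1 then c1 else 0"] by auto
    have LfS: "Lf (L + 1) x = c1" for x
    proof -
      have "\<And>x. (Lf (L + 1) has_real_derivative 0) (at x)"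
        using CfamD[OF Lf(2), of "L + 1"] Lf(1) nL by simp
      from deriv_const_affine[OF this] show ?thesis using Lf(4) nL by simp
    qed
    have LfL: "Lf L x = c0 + c1 * x" for x
    proof -
      have "\<And>x. (Lf L has_real_derivative c1) (at x)"
        using CfamD[OF Lf(2), of L] LfS nL by simp
      from deriv_const_affine[OF this] show ?thesis using Lf(4) nL by simp
    qed
    obtain Qf where Qf: "Qf n = (\<lambda>x. 2)" "Cfam n Qf" "\<forall>j\<le>n. continuous_on UNIV (Qf j)" "\<forall>j<n. Qf j 0 = 0"
      using tower[of "\<lambda>x. 2" n "\<lambda>j. 0"] by auto
    have QfS: "Qf (L + 1) x = 2 * x" for x
    proof -
      have "\<And>x. (Qf (L + 1) has_real_derivative 2) (at x)"
        using CfamD[OF Qf(2), of "L + 1"] Qf(1) nL by simp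
      from deriv_const_affine[OF this] show ?thesis using Qf(4) nL by simp
    qed
    have QfL: "Qf L x = x ^ 2" for x
    proof -
      have "\<forall>x. ((\<lambda>x. Qf L x - x ^ 2) has_real_derivative 0) (at x)"
      proof
        fix x
        have "(Qf L has_real_derivative Qf (Suc L) x) (at x)"
          using Qf(2) nL unfolding Cfam_def by simp
        thus "((\<lambda>x. Qf L x - x ^ 2) has_real_derivative 0) (at x)"
          using QfS[of x] by (auto intro!: derivative_eq_intros)
      qed
      from DERIV_isconst_all[OF this, of x 0] show ?thesis using Qf(4) nL by simp
    qed
    define Z where "Z = (\<lambda>j x. sg * (X j x - Lf j x) + e * Qf j x)"
    have CZ: "Cfam (L + 1) Z"
    proof -
      have "Cfam (L + 1) (\<lambda>j x. 1 * X j x + (-1) * Lf j x)"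
        by (rule Cfam_diff[OF CX Cfam_mono[OF Lf(2)]]) (use nL in simp)
      hence "Cfam (L + 1) (\<lambda>j x. sg * (1 * X j x + (-1) * Lf j x) + e * Qf j x)"
        using Cfam_diff[OF _ Cfam_mono[OF Qf(2)], of "L + 1" _ sg e] nL by simp
      thus ?thesis by (simp add: Z_def)
    qed
    have CZL: "Cfam L Z" using Cfam_mono[OF CZ] by simp
    have contZ: "continuous_on UNIV (Z L)"
      unfolding Z_def using contX[of L] Lf(3) Qf(3) nL by (intro continuous_intros) auto
    have PZ: "((\<lambda>s. appP s P (2 * dd) (Z 0) t / s ^ n) \<longlongrightarrow> sg * (0 - poly Q 1 * Lf n t) + e * (poly Q 1 * Qf n t)) (at 0)"
    proof -
      have "((\<lambda>s. sg * (appP s P (2 * dd) (X 0) t / s ^ n - appP s P (2 * dd) (Lf 0) t / s ^ n)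
            + e * (appP s P (2 * dd) (Qf 0) t / s ^ n)) \<longlongrightarrow> sg * (0 - poly Q 1 * Lf n t) + e * (poly Q 1 * Qf n t)) (at 0)"
        by (intro tendsto_intros PX Psmooth) (use Lf Qf in auto)
      moreover have "(\<lambda>s. appP s P (2 * dd) (Z 0) t / s ^ n) = (\<lambda>s. sg * (appP s P (2 * dd) (X 0) t / s ^ n - appP s P (2 * dd) (Lf 0) t / s ^ n)
            + e * (appP s P (2 * dd) (Qf 0) t / s ^ n))"
        unfolding Z_def by (intro ext) (simp only: appP_gadd appP_gcmult appP_gdiff add_divide_distrib diff_divide_distrib times_divide_eq_right[symmetric])
      ultimately show ?thesis by simp
    qed
    have lpos: "0 < (sg * (0 - poly Q 1 * Lf n t) + e * (poly Q 1 * Qf n t)) / 2 ^ L / 3"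
      using Lf(1) Qf(1) A2 e by simp
    have ev1: "eventually (\<lambda>s. 0 < U Z t s / s ^ 2) (at 0)"
      by (rule order_tendstoD(1)[OF Ulim[OF CZL contZ PZ] lpos])
    have ev2: "eventually (\<lambda>s. R * \<bar>s\<bar> < d) (at 0)"
    proof -
      have "((\<lambda>s. R * \<bar>s\<bar>) \<longlongrightarrow> R * \<bar>0\<bar>) (at (0::real))"
        by (intro tendsto_intros)
      thus ?thesis using d by (simp add: order_tendstoD(2))
    qed
    obtain s where s: "s \<noteq> 0" "0 < U Z t s / s ^ 2" "R * \<bar>s\<bar> < d"
    proof -
      have "eventually (\<lambda>s. s \<noteq> 0 \<and> 0 < U Z t s / s ^ 2 \<and> R * \<bar>s\<bar> < d) (at 0)"
      proof -
        have e0: "eventually (\<lambda>s::real. s \<noteq> 0) (at 0)" by (simp add: eventually_at_filter)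
        show ?thesis using e0 ev1 ev2 by eventually_elim auto
      qed
      from eventually_happens[OF this] show ?thesis using that by auto
    qed
    obtain x1 x2 where x: "\<bar>x1 - t\<bar> \<le> R * \<bar>s\<bar>" "\<bar>x2 - t\<bar> \<le> R * \<bar>s\<bar>"
      "appP s pB (real dB) (Z 0) t = s ^ L * (w * (Z L x1 + Z L x2))"
      using A3[OF CZL s(1)] by blast
    have ZL: "Z L x = sg * (X L x - c0 - c1 * x) + e * x ^ 2" for x
      by (simp add: Z_def LfL QfL algebra_simps)
    have z1: "Z L x1 \<le> Z L t" and z2: "Z L x2 \<le> Z L t"
      using hext x s(3) unfolding ZL by auto
    have q: "appP s pB dd (Z 0) t / s ^ L = w * (Z L x1 + Z L x2)"
      using x(3) s(1) by (simp add: dd_def)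
    have "U Z t s = w * (Z L x1 - Z L t) + w * (Z L x2 - Z L t)"
      unfolding U_def q by (simp add: algebra_simps)
    moreover have "w * (Z L x1 - Z L t) \<le> 0" using w z1 by (intro mult_nonneg_nonpos) auto
    moreover have "w * (Z L x2 - Z L t) \<le> 0" using w z2 by (intro mult_nonneg_nonpos) auto
    ultimately have "U Z t s \<le> 0" by linarith
    moreover have "0 < U Z t s" using s(2) s(1) by (simp add: zero_less_divide_iff)
    ultimately show False by simp
  qed
  have affine: "X L x = X L 0 + (X L 1 - X L 0) * x" for x
  proof (rule MP0[OF contX[of L]])
    show "L \<le> L + 1" by simp
  next
    fix e c0 c1 t d
    assume "0 < e" "0 < d" "\<forall>x. \<bar>x - t\<bar> < d \<longrightarrow> X L x - c0 - c1 * x + e * x\<^sup>2 \<le> X L t - c0 - c1 * t + e * t\<^sup>2"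
    thus False using noext[of e d 1 t c0 c1] by simp
  next
    fix e c0 c1 t d
    assume "0 < e" "0 < d" "\<forall>x. \<bar>x - t\<bar> < d \<longrightarrow> X L t - c0 - c1 * t - e * t\<^sup>2 \<le> X L x - c0 - c1 * x - e * x\<^sup>2"
    thus False using noext[of e d "-1" t c0 c1] by (simp add: algebra_simps)
  qed
  define beta where "beta = X L 1 - X L 0"
  have XS: "X (L + 1) x = beta" for x
  proof -
    have "(X L has_real_derivative X (Suc L) x) (at x)" using CX unfolding Cfam_def by simp
    moreover have "(X L has_real_derivative beta) (at x)"
    proof -
      have "((\<lambda>x. X L 0 + beta * x) has_real_derivative beta) (at x)"
        by (auto intro!: derivative_eq_intros)
      moreover have "X L = (\<lambda>x. X L 0 + beta * x)"
      proof
        fix x show "X L x = X L 0 + beta * x" using affine[of x] by (simp add: beta_def)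
      qed
      ultimately show ?thesis by simp
    qed
    ultimately show ?thesis by (simp add: DERIV_unique)
  qed
  have "D (L + 1) x = Gm (L + 1) x + beta" for x using XS[of x] by (simp add: X_def)
  hence Deq: "D (L + 1) = (\<lambda>x. Gm (L + 1) x + beta)" by auto
  have "\<forall>x. (D (L + 1) has_real_derivative Gm n x) (at x)"
  proof
    fix x
    have "(Gm (L + 1) has_real_derivative Gm (Suc (L + 1)) x) (at x)"
      using Gm(2) nL unfolding Cfam_def by simp
    thus "(D (L + 1) has_real_derivative Gm n x) (at x)"
      unfolding Deq using nL by (auto intro!: derivative_eq_intros)
  qed
  moreover have "continuous_on UNIV (Gm n)" using Gm(3) by simp
  ultimately show ?thesis by blast
qed

lemma pcompose_power: "(p ^ m) \<circ>\<^sub>p q = (p \<circ>\<^sub>p q) ^ m"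
  by (induct m) (simp_all add: pcompose_mult pcompose_1)

lemma monom_1_pow: "monom (1::real) k = [:0, 1:] ^ k"
  by (simp add: monom_altdef)

lemma smult_pow_x: "smult ((c::real) ^ k) ([:0, 1:] ^ k) = [:0, c:] ^ k"
  using smult_power[of c "[:0, 1:]" k] by simp

lemma spec_avg:
  "[:1/2, 0, 1/2:] \<circ>\<^sub>p [:0, 0, 1:] - smult (2 ^ 0) (monom 1 1 * [:1/2, 0, 1/2:])
     = [:-1, 1:] ^ (0 + 2) * [:1/2, 1/2, 1/2::real:]"
  by (simp add: pcompose_pCons monom_Suc mult_pCons_left mult_pCons_right numeral_2_eq_2)

definition W0 :: "nat \<Rightarrow> real poly" where
  "W0 k = (\<Sum>i<k. [:0, 4:] ^ (k - Suc i) * ([:1, 1:] ^ 2) ^ i)"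

lemma W0_id: "[:1, 1:] ^ (2 * k) - [:0, 4:] ^ k = [:-1, 1:] ^ 2 * W0 k"
proof -
  have "[:1, 1::real:] ^ (2 * k) = ([:1, 1:] ^ 2) ^ k" by (simp add: power_mult)
  moreover have "([:1, 1:] ^ 2) ^ k - [:0, 4:] ^ k = ([:1, 1:] ^ 2 - [:0, 4:]) * W0 k"
    unfolding W0_def by (rule power_diff_sumr2)
  moreover have "[:1, 1::real:] ^ 2 - [:0, 4:] = [:-1, 1:] ^ 2"
    by (simp add: power2_eq_square mult_pCons_left mult_pCons_right)
  ultimately show ?thesis by simp
qed

lemma W0_1: "poly (W0 k) 1 = real k * 4 ^ (k - 1)"
proof -
  have "poly (W0 k) 1 = (\<Sum>i<k. (4::real) ^ (k - Suc i) * 4 ^ i)"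
    unfolding W0_def by (simp add: poly_sum poly_power power2_eq_square)
  also have "\<dots> = (\<Sum>i<k. (4::real) ^ (k - 1))"
    by (intro sum.cong refl) (simp add: power_add[symmetric])
  finally show ?thesis by simp
qed

lemma spec_even:
  assumes "L = 2 * k"
  shows "[:-1, 1:] ^ L \<circ>\<^sub>p [:0, 0, 1:] - smult (2 ^ L) (monom 1 k * [:-1, 1:] ^ L)
     = [:-1, 1:] ^ (L + 2) * W0 k"
proof -
  have c: "[:-1, 1::real:] \<circ>\<^sub>p [:0, 0, 1:] = [:-1, 1:] * [:1, 1:]"
    by (simp add: pcompose_pCons mult_pCons_left mult_pCons_right)
  have h1: "[:-1, 1::real:] ^ L \<circ>\<^sub>p [:0, 0, 1:] = [:-1, 1:] ^ L * [:1, 1:] ^ (2 * k)"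
    unfolding pcompose_power c power_mult_distrib assms ..
  have h24: "(2::real) ^ L = 4 ^ k" by (simp add: assms power_mult)
  have h2: "smult (2 ^ L) (monom 1 k * [:-1, 1:] ^ L) = [:-1, 1::real:] ^ L * [:0, 4:] ^ k"
    unfolding h24 monom_1_pow mult_smult_left[symmetric] smult_pow_x by (rule mult.commute)
  have "[:-1, 1:] ^ L \<circ>\<^sub>p [:0, 0, 1:] - smult (2 ^ L) (monom 1 k * [:-1, 1:] ^ L)
      = [:-1, 1:] ^ L * ([:1, 1:] ^ (2 * k) - [:0, 4::real:] ^ k)"
    unfolding h1 h2 right_diff_distrib ..
  also have "\<dots> = [:-1, 1:] ^ (L + 2) * W0 k"
    unfolding W0_id power_add mult.assoc ..
  finally show ?thesis .
qed

definition W1 :: "nat \<Rightarrow> real poly" where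
  "W1 k = [:1, 1:] * ([:1, 0, 1:] * W0 k + [:0, 4:] ^ k)"

lemma spec_odd:
  assumes "L = 2 * k + 1"
  shows "([:-1, 1:] ^ L * [:1, 1:]) \<circ>\<^sub>p [:0, 0, 1:] - smult (2 ^ L) (monom 1 (k + 1) * ([:-1, 1:] ^ L * [:1, 1:]))
     = [:-1, 1:] ^ (L + 2) * W1 k"
proof -
  have c: "[:-1, 1::real:] \<circ>\<^sub>p [:0, 0, 1:] = [:-1, 1:] * [:1, 1:]"
    by (simp add: pcompose_pCons mult_pCons_left mult_pCons_right)
  have c2: "[:1, 1::real:] \<circ>\<^sub>p [:0, 0, 1:] = [:1, 0, 1:]"
    by (simp add: pcompose_pCons)
  have h1: "([:-1, 1::real:] ^ L * [:1, 1:]) \<circ>\<^sub>p [:0, 0, 1:] = ([:-1, 1:] ^ L * [:1, 1:]) * ([:1, 1:] ^ (2 * k) * [:1, 0, 1:])"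
  proof -
    have "([:-1, 1::real:] ^ L * [:1, 1:]) \<circ>\<^sub>p [:0, 0, 1:] = ([:-1, 1:] * [:1, 1:]) ^ L * [:1, 0, 1:]"
      unfolding pcompose_mult pcompose_power c c2 ..
    also have "\<dots> = [:-1, 1:] ^ L * [:1, 1:] ^ (2 * k + 1) * [:1, 0, 1:]"
      unfolding power_mult_distrib assms ..
    also have "\<dots> = ([:-1, 1:] ^ L * [:1, 1:]) * ([:1, 1:] ^ (2 * k) * [:1, 0, 1:])"
      by (simp only: power_add power_one_right mult_ac)
    finally show ?thesis .
  qed
  have h24: "(2::real) ^ L = 2 * 4 ^ k" by (simp add: assms power_mult power_add)
  have x2: "[:0, 2::real:] = smult 2 [:0, 1:]" by simp
  have h2: "smult (2 ^ L) (monom 1 (k + 1) * ([:-1, 1:] ^ L * [:1, 1:]))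
      = ([:-1, 1::real:] ^ L * [:1, 1:]) * ([:0, 4:] ^ k * [:0, 2:])"
  proof -
    have "smult (2 ^ L) (monom 1 (k + 1) * ([:-1, 1:] ^ L * [:1, 1:]))
       = smult (4 ^ k) ([:0, 1:] ^ k) * smult 2 [:0, 1::real:] * ([:-1, 1:] ^ L * [:1, 1:])"
      unfolding h24 monom_1_pow power_add power_one_right
      by (simp only: mult_smult_left mult_smult_right smult_smult mult.assoc)
    also have "\<dots> = ([:-1, 1::real:] ^ L * [:1, 1:]) * ([:0, 4:] ^ k * [:0, 2:])"
      unfolding smult_pow_x x2[symmetric] by (simp only: mult_ac)
    finally show ?thesis .
  qed
  have h3: "[:1, 1:] ^ (2 * k) * [:1, 0, 1:] - [:0, 4:] ^ k * [:0, 2::real:]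
      = [:1, 0, 1:] * ([:1, 1:] ^ (2 * k) - [:0, 4:] ^ k) + [:0, 4:] ^ k * ([:1, 0, 1:] - [:0, 2:])"
    by (simp only: right_diff_distrib mult_ac diff_add_eq add_diff_cancel_left')
  have h4: "[:1, 0, 1:] - [:0, 2::real:] = [:-1, 1:] ^ 2"
    by (simp add: power2_eq_square mult_pCons_left mult_pCons_right)
  have "([:-1, 1:] ^ L * [:1, 1:]) \<circ>\<^sub>p [:0, 0, 1:] - smult (2 ^ L) (monom 1 (k + 1) * ([:-1, 1:] ^ L * [:1, 1:]))
      = ([:-1, 1:] ^ L * [:1, 1:]) * ([:1, 1:] ^ (2 * k) * [:1, 0, 1:] - [:0, 4:] ^ k * [:0, 2::real:])"
    unfolding h1 h2 right_diff_distrib ..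
  also have "\<dots> = ([:-1, 1:] ^ L * [:1, 1:]) * ([:-1, 1:] ^ 2 * ([:1, 0, 1:] * W0 k + [:0, 4:] ^ k))"
    unfolding h3 h4 W0_id by (simp only: distrib_left mult_ac)
  also have "\<dots> = [:-1, 1:] ^ (L + 2) * W1 k"
    unfolding W1_def power_add by (simp only: mult_ac)
  finally show ?thesis .
qed

lemma W1_1: "0 < poly (W1 k) 1"
  by (simp add: W1_def W0_1 add_nonneg_pos)

lemma sum_list_abs_rep: "sum_list (map abs (replicate L (s::real))) = real L * \<bar>s\<bar>"
  by (induct L) (simp_all add: algebra_simps)

lemma prod_list_rep: "prod_list (replicate L (s::real)) = s ^ L"
  by (induct L) simp_all

lemma A3_pow:
  assumes "Cfam L G" and that: "0 \<le> d"
  shows "\<exists>x. \<bar>x - t\<bar> \<le> (real L + d) * \<bar>s\<bar> \<and> appP s ([:-1, 1:] ^ L) d (G 0) t = s ^ L * G L x"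
proof -
  obtain x where x: "\<bar>x - (t - d * s)\<bar> \<le> sum_list (map abs (replicate L s))"
    "Dl L (replicate L s) (G 0) (t - d * s) = prod_list (replicate L s) * G L x"
    using MVTD[OF assms(1), of "replicate L s" "t - d * s"] by auto
  have "\<bar>x - t\<bar> \<le> \<bar>x - (t - d * s)\<bar> + d * \<bar>s\<bar>"
    using abs_triangle_ineq4[of "x - (t - d * s)" "d * s"] that by (simp add: abs_mult)
  also have "\<dots> \<le> (real L + d) * \<bar>s\<bar>" using x(1) unfolding sum_list_abs_rep by (simp add: algebra_simps)
  finally show ?thesis using x(2) by (intro exI[of _ x]) (simp add: appP_Xm1pow prod_list_rep)
qed

lemma A3_even:
  assumes "Cfam L G"
  shows "\<exists>x1 x2. \<bar>x1 - t\<bar> \<le> (real L + real k) * \<bar>s\<bar> \<and> \<bar>x2 - t\<bar> \<le> (real L + real k) * \<bar>s\<bar> \<and>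
     appP s ([:-1, 1:] ^ L) (real k) (G 0) t = s ^ L * (1/2 * (G L x1 + G L x2))"
proof -
  obtain x where "\<bar>x - t\<bar> \<le> (real L + real k) * \<bar>s\<bar>" "appP s ([:-1, 1:] ^ L) (real k) (G 0) t = s ^ L * G L x"
    using A3_pow[OF assms, of "real k" t s] by auto
  thus ?thesis by (intro exI[of _ x] exI[of _ x]) simp
qed

lemma A3_odd:
  assumes "Cfam L G"
  shows "\<exists>x1 x2. \<bar>x1 - t\<bar> \<le> (real L + real (k + 1)) * \<bar>s\<bar> \<and> \<bar>x2 - t\<bar> \<le> (real L + real (k + 1)) * \<bar>s\<bar> \<and>
     appP s ([:-1, 1:] ^ L * [:1, 1:]) (real (k + 1)) (G 0) t = s ^ L * (1 * (G L x1 + G L x2))"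
proof -
  obtain x1 where x1: "\<bar>x1 - t\<bar> \<le> (real L + real (k + 1)) * \<bar>s\<bar>"
    "appP s ([:-1, 1:] ^ L) (real (k + 1)) (G 0) t = s ^ L * G L x1"
    using A3_pow[OF assms, of "real (k + 1)" t s] by auto
  obtain x2 where x2: "\<bar>x2 - t\<bar> \<le> (real L + real k) * \<bar>s\<bar>"
    "appP s ([:-1, 1:] ^ L) (real k) (G 0) t = s ^ L * G L x2"
    using A3_pow[OF assms, of "real k" t s] by auto
  have "appP s ([:-1, 1:] ^ L * [:1, 1:]) (real (k + 1)) (G 0) t
      = appP s ([:-1, 1:] ^ L) (real (k + 1)) (G 0) t + appP s ([:-1, 1:] ^ L) (real k) (G 0) t"
  proof -
    have "appP s ([:-1, 1:] ^ L * pCons 1 [:1:]) (real (k + 1)) (G 0) t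
      = 1 * appP s ([:-1, 1:] ^ L) (real (k + 1)) (G 0) t + appP s ([:-1, 1:] ^ L * [:1:]) (real (k + 1) - 1) (G 0) t"
      by (rule appP_mult_pCons)
    thus ?thesis by (simp add: one_pCons[symmetric])
  qed
  moreover have "\<bar>x2 - t\<bar> \<le> (real L + real (k + 1)) * \<bar>s\<bar>"
    using x2(1) by (smt (verit) abs_ge_zero mult_right_mono of_nat_Suc Suc_eq_plus1)
  ultimately show ?thesis using x1 x2 by (intro exI[of _ x1] exI[of _ x2]) (simp add: algebra_simps)
qed

lemma A3_avg:
  "\<exists>x1 x2. \<bar>x1 - t\<bar> \<le> 1 * \<bar>s\<bar> \<and> \<bar>x2 - t\<bar> \<le> 1 * \<bar>s\<bar> \<and>
     appP s [:1/2, 0, 1/2:] (real 1) (G 0) t = s ^ 0 * (1/2 * (G 0 x1 + G 0 x2))"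
  by (intro exI[of _ "t - s"] exI[of _ "t + s"]) (simp add: appP_pCons algebra_simps)

theorem core1d:
  fixes phi :: "real \<Rightarrow> real" and e :: "nat \<Rightarrow> real list \<Rightarrow> real \<Rightarrow> real"
  assumes "\<And>k cs t. k \<le> N \<Longrightarrow> length cs = k \<Longrightarrow> ((\<lambda>s. Dl k (map ((*) s) cs) phi t / s ^ k) \<longlongrightarrow> e k cs t) (at 0)"
    and "\<And>k cs. k \<le> N \<Longrightarrow> length cs = k \<Longrightarrow> continuous_on UNIV (e k cs)"
  shows "\<exists>D. D 0 = phi \<and> Cfam N D \<and> (\<forall>j\<le>N. continuous_on UNIV (D j)) \<and>
     (\<forall>j\<le>N. \<forall>cs t. length cs = j \<longrightarrow> e j cs t = prod_list cs * D j t)"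
  using assms
proof (induct N)
  case 0
  have e0: "e 0 [] t = phi t" for t
  proof -
    have "((\<lambda>s. phi t) \<longlongrightarrow> e 0 [] t) (at (0::real))" using 0(1)[of 0 "[]" t] by simp
    moreover have "((\<lambda>s. phi t) \<longlongrightarrow> phi t) (at (0::real))" by simp
    ultimately show ?thesis by (rule LIM_unique)
  qed
  have "continuous_on UNIV phi"
  proof -
    have "continuous_on UNIV (e 0 [])" using 0(2)[of 0 "[]"] by simp
    moreover have "e 0 [] = phi" using e0 by auto
    ultimately show ?thesis by simp
  qed
  thus ?case using e0 by (intro exI[of _ "\<lambda>j. phi"]) (simp add: Cfam_def)
next
  case (Suc N)
  obtain D where D: "D 0 = phi" "Cfam N D" "\<forall>j\<le>N. continuous_on UNIV (D j)"
      "\<forall>j\<le>N. \<forall>cs t. length cs = j \<longrightarrow> e j cs t = prod_list cs * D j t"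
  proof -
    have h1: "\<And>k cs t. k \<le> N \<Longrightarrow> length cs = k \<Longrightarrow> ((\<lambda>s. Dl k (map ((*) s) cs) phi t / s ^ k) \<longlongrightarrow> e k cs t) (at 0)"
      using Suc.prems(1) by simp
    have h2: "\<And>k cs. k \<le> N \<Longrightarrow> length cs = k \<Longrightarrow> continuous_on UNIV (e k cs)"
      using Suc.prems(2) by simp
    show ?thesis using Suc.hyps[OF h1 h2] that by blast
  qed
  have "\<exists>h. continuous_on UNIV h \<and> (\<forall>x. (D N has_real_derivative h x) (at x))"
  proof (cases N)
    case 0
    have "(phi has_real_derivative e 1 [1] x) (at x)" for x
    proof -
      have "((\<lambda>s. Dl 1 (map ((*) s) [1]) phi x / s ^ 1) \<longlongrightarrow> e 1 [1] x) (at 0)"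
        using Suc.prems(1)[of 1 "[1]" x] 0 by simp
      thus ?thesis unfolding DERIV_def by (simp add: Dl_Suc add.commute)
    qed
    thus ?thesis using Suc.prems(2)[of 1 "[1]"] 0 D(1) by auto
  next
    case (Suc L)
    let ?n = "L + 2"
    have nN: "Suc N = ?n" using Suc by simp
    have CD: "Cfam (L + 1) D" using D(2) Suc by simp
    have contD: "\<And>j. j \<le> L + 1 \<Longrightarrow> continuous_on UNIV (D j)" using D(3) Suc by simp
    have lev: "\<exists>e'. has_lev ?n (D 0) cs e' \<and> continuous_on UNIV e'" if "length cs = ?n" for cs
      using Suc.prems(1)[of ?n cs] Suc.prems(2)[of ?n cs] that nN D(1)
      unfolding has_lev_def by auto
    have "\<exists>h. continuous_on UNIV h \<and> (\<forall>x. (D (L + 1) has_real_derivative h x) (at x))"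
    proof (cases "L = 0")
      case True
      have A1: "[:1/2, 0, 1/2:] \<circ>\<^sub>p [:0, 0, 1:] - smult (2 ^ L) (monom 1 1 * [:1/2, 0, 1/2:])
         = [:-1, 1:] ^ (L + 2) * [:1/2, 1/2, 1/2::real:]"
        using spec_avg unfolding True .
      have A3: "\<exists>x1 x2. \<bar>x1 - t\<bar> \<le> 1 * \<bar>s\<bar> \<and> \<bar>x2 - t\<bar> \<le> 1 * \<bar>s\<bar> \<and>
            appP s [:1/2, 0, 1/2:] (real 1) (G 0) t = s ^ L * ((1/2) * (G L x1 + G L x2))"
        if "Cfam L G" "s \<noteq> 0" for G s t
        using A3_avg[of t s G] unfolding True .
      show ?thesis
        by (rule step_lemma[where pB="[:1/2, 0, 1/2:]" and dB=1 and Q="[:1/2, 1/2, 1/2:]" and w="1/2" and R=1,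
              OF refl A1 _ _ _ A3 CD contD lev]) simp_all
    next
      case False
      show ?thesis
      proof (cases "even L")
        case True
        then obtain k where k: "L = 2 * k" by auto
        have k1: "1 \<le> k" using k False by simp
        have A2: "0 < poly (W0 k) 1" using k1 by (simp add: W0_1)
        have R: "0 \<le> real L + real k" by simp
        show ?thesis
          by (rule step_lemma[where pB="[:-1, 1:] ^ L" and dB=k and Q="W0 k" and w="1/2" and R="real L + real k",
              OF refl spec_even[OF k] A2 _ R A3_even CD contD lev]) simp_all
      next
        case odd: False
        then obtain k where k: "L = 2 * k + 1" using oddE by blast
        have R: "0 \<le> real L + real (k + 1)" by simp
        show ?thesis
          by (rule step_lemma[where pB="[:-1, 1:] ^ L * [:1, 1:]" and dB="k + 1" and Q="W1 k" and w=1 and R="real L + real (k + 1)",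
              OF refl spec_odd[OF k] W1_1 _ R A3_odd CD contD lev]) simp_all
      qed
    qed
    thus ?thesis using Suc by simp
  qed
  then obtain h where h: "continuous_on UNIV h" "\<And>x. (D N has_real_derivative h x) (at x)" by blast
  define D' where "D' j = (if j \<le> N then D j else h)" for j
  have CD': "Cfam (Suc N) D'"
    unfolding Cfam_def
  proof (intro allI impI)
    fix j x assume j: "j < Suc N"
    show "(D' j has_real_derivative D' (Suc j) x) (at x)"
    proof (cases "j < N")
      case True thus ?thesis using D(2) j by (simp add: D'_def Cfam_def)
    next
      case False hence "j = N" using j by simp
      thus ?thesis using h(2) by (simp add: D'_def)
    qed
  qed
  have contD': "\<forall>j\<le>Suc N. continuous_on UNIV (D' j)"
    using D(3) h(1) by (auto simp: D'_def le_Suc_eq)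
  have ident: "e j cs t = prod_list cs * D' j t" if "j \<le> Suc N" "length cs = j" for j cs t
  proof (cases "j \<le> N")
    case True thus ?thesis using D(4) that by (simp add: D'_def)
  next
    case False
    hence j: "j = Suc N" using that by simp
    have "((\<lambda>s. Dl j (map ((*) s) cs) (D' 0) t / s ^ j) \<longlongrightarrow> prod_list cs * D' j t) (at 0)"
      by (rule dprod_limit_smooth) (use CD' contD' j that in auto)
    moreover have "D' 0 = phi" using D(1) by (simp add: D'_def)
    ultimately show ?thesis using Suc.prems(1)[of j cs t] that by (auto intro: LIM_unique)
  qed
  have D'0: "D' 0 = phi" using D(1) by (simp add: D'_def)
  show ?case using D'0 CD' contD' ident by blast
qed

lemma md_tendsto:
  assumes "md_exists k m F" "length us = k + m"
  shows "((\<lambda>s. Dl k (map (scaleR s) us) (\<lambda>p. F p (drop k us)) q / s ^ k) \<longlongrightarrow> md k F q us) (at 0)"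
proof -
  obtain L where L: "has_md k F q us L" using assms unfolding md_exists_def by blast
  have e: "md_quot k F q us = (\<lambda>s. Dl k (map (scaleR s) us) (\<lambda>p. F p (drop k us)) q / s ^ k)"
    using assms(2) by (intro ext md_quot_Dl) simp
  have "(md_quot k F q us \<longlongrightarrow> L) (at 0)" using L unfolding has_md_def .
  moreover hence "md k F q us = L" unfolding md_def by (intro tendsto_Lim) auto
  ultimately show ?thesis using e by simp
qed

lemma md_F0_tendsto:
  assumes "md_exists k 0 (\<lambda>q ws. f q)" "length us = k"
  shows "((\<lambda>s. Dl k (map (scaleR s) us) f q / s ^ k) \<longlongrightarrow> md k (\<lambda>q ws. f q) q us) (at 0)"
  using md_tendsto[OF assms(1), of us q] assms(2) by simp

lemma md_0_F0: "md 0 (\<lambda>q ws. f q) q us = f q"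
proof -
  have "md_quot 0 (\<lambda>q ws. f q) q us = (\<lambda>s. f q)"
    by (intro ext) (simp add: md_quot_def polar_def)
  thus ?thesis unfolding md_def by (simp add: tendsto_Lim)
qed

lemma Dl_line:
  "k \<le> length cs \<Longrightarrow> Dl k (map (scaleR s) (map (\<lambda>c. c *\<^sub>R z) cs)) f (p + t *\<^sub>R z)
     = Dl k (map ((*) s) cs) (\<lambda>t'. f (p + t' *\<^sub>R z)) t"
proof (induct k arbitrary: t)
  case 0 thus ?case by simp
next
  case (Suc k)
  have k: "k < length cs" using Suc by simp
  have "Dl k (map (scaleR s) (map (\<lambda>c. c *\<^sub>R z) cs)) f (p + t *\<^sub>R z + s *\<^sub>R (cs ! k *\<^sub>R z))
     = Dl k (map (scaleR s) (map (\<lambda>c. c *\<^sub>R z) cs)) f (p + (t + s * cs ! k) *\<^sub>R z)"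
    by (simp add: algebra_simps scaleR_add_left)
  thus ?case using Suc k by (simp add: Dl_Suc)
qed

definition tau :: "('a::real_normed_vector \<Rightarrow> real) \<Rightarrow> nat \<Rightarrow> 'a \<Rightarrow> 'a \<Rightarrow> real" where
  "tau f j y z = md j (\<lambda>q ws. f q) y (replicate j z)"

lemma tau_0: "tau f 0 y z = f y"
  by (simp add: tau_def md_0_F0)

lemma cont_prod_isCont:
  assumes "cont_on_prod k G" "length us = k"
  shows "isCont (\<lambda>y. G y us) y"
  unfolding continuous_at_eps_delta
proof (intro allI impI)
  fix e :: real assume e: "0 < e"
  obtain d where d: "0 < d" "\<And>q' us'. length us' = k \<and> dist q' y < d \<and> (\<forall>i<k. dist (us' ! i) (us ! i) < d)
      \<longrightarrow> \<bar>G q' us' - G y us\<bar> < e"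
    using assms e unfolding cont_on_prod_def by blast
  show "\<exists>d>0. \<forall>x'. dist x' y < d \<longrightarrow> dist (G x' us) (G y us) < e"
    using d assms(2) by (intro exI[of _ d]) (auto simp: dist_real_def)
qed

lemma lineC:
  fixes f :: "'a::euclidean_space \<Rightarrow> real"
  assumes H: "\<forall>k\<le>N. md_exists k 0 (\<lambda>q ws. f q) \<and> cont_on_prod k (md k (\<lambda>q ws. f q))"
  shows "Cfam N (\<lambda>j t. tau f j (p + t *\<^sub>R z) z) \<and> (\<forall>j\<le>N. continuous_on UNIV (\<lambda>t. tau f j (p + t *\<^sub>R z) z))"
proof -
  let ?F = "\<lambda>q ws. f q"
  define e where "e k cs t = md k ?F (p + t *\<^sub>R z) (map (\<lambda>c. c *\<^sub>R z) cs)" for k cs t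
  have hyp: "((\<lambda>s. Dl k (map ((*) s) cs) (\<lambda>t. f (p + t *\<^sub>R z)) t / s ^ k) \<longlongrightarrow> e k cs t) (at 0)"
    if "k \<le> N" "length cs = k" for k cs t
  proof -
    have "((\<lambda>s. Dl k (map (scaleR s) (map (\<lambda>c. c *\<^sub>R z) cs)) f (p + t *\<^sub>R z) / s ^ k) \<longlongrightarrow> e k cs t) (at 0)"
      unfolding e_def by (rule md_F0_tendsto) (use H that in auto)
    thus ?thesis using Dl_line[of k cs s z f p t for s] that by simp
  qed
  have cont: "continuous_on UNIV (e k cs)" if "k \<le> N" "length cs = k" for k cs
  proof -
    have "\<And>y. isCont (\<lambda>y. md k ?F y (map (\<lambda>c. c *\<^sub>R z) cs)) y"
      by (rule cont_prod_isCont) (use H that in auto)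
    hence "continuous_on UNIV (\<lambda>y. md k ?F y (map (\<lambda>c. c *\<^sub>R z) cs))"
      by (simp add: continuous_on_eq_continuous_at)
    hence "continuous_on UNIV ((\<lambda>y. md k ?F y (map (\<lambda>c. c *\<^sub>R z) cs)) \<circ> (\<lambda>t. p + t *\<^sub>R z))"
      by (intro continuous_on_compose continuous_intros) (auto intro: continuous_on_subset)
    thus ?thesis by (simp add: e_def comp_def)
  qed
  obtain D where D: "D 0 = (\<lambda>t. f (p + t *\<^sub>R z))" "Cfam N D" "\<forall>j\<le>N. continuous_on UNIV (D j)"
    "\<forall>j\<le>N. \<forall>cs t. length cs = j \<longrightarrow> e j cs t = prod_list cs * D j t"
    using core1d[of N "\<lambda>t. f (p + t *\<^sub>R z)" e, OF hyp cont] by blast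
  have DE: "D j = (\<lambda>t. tau f j (p + t *\<^sub>R z) z)" if "j \<le> N" for j
  proof
    fix t
    have "e j (replicate j 1) t = prod_list (replicate j 1) * D j t"
      using D(4) that by simp
    moreover have "map (\<lambda>c. c *\<^sub>R z) (replicate j (1::real)) = replicate j z" by simp
    ultimately show "D j t = tau f j (p + t *\<^sub>R z) z"
      by (simp add: e_def tau_def)
  qed
  have "Cfam N (\<lambda>j t. tau f j (p + t *\<^sub>R z) z)"
    unfolding Cfam_def
  proof (intro allI impI)
    fix j x assume j: "j < N"
    have "(D j has_real_derivative D (Suc j) x) (at x)" using D(2) j by (simp add: Cfam_def)
    thus "((\<lambda>t. tau f j (p + t *\<^sub>R z) z) has_real_derivative tau f (Suc j) (p + x *\<^sub>R z) z) (at x)"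
      using DE[of j] DE[of "Suc j"] j by simp
  qed
  moreover have "\<forall>j\<le>N. continuous_on UNIV (\<lambda>t. tau f j (p + t *\<^sub>R z) z)"
    using D(3) DE by auto
  ultimately show ?thesis by blast
qed

lemma taylor_line:
  fixes f :: "'a::real_normed_vector \<Rightarrow> real"
  assumes C: "Cfam N (\<lambda>j t. tau f j (p + t *\<^sub>R z) z)"
  shows "\<exists>xi. \<bar>xi\<bar> \<le> \<bar>r\<bar> \<and> f (p + r *\<^sub>R z) =
    (\<Sum>m<N. tau f m p z / fact m * r ^ m) + tau f N (p + xi *\<^sub>R z) z / fact N * r ^ N"
proof (cases "N = 0")
  case True thus ?thesis by (intro exI[of _ r]) (simp add: tau_0)
next
  case N: False
  show ?thesis
  proof (cases "r = 0")
    case True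
    have "(\<Sum>m<N. tau f m p z / fact m * 0 ^ m) = (\<Sum>m\<in>{0}. tau f m p z / fact m * 0 ^ m)"
      by (rule sum.mono_neutral_right) (use N in auto)
    thus ?thesis using True N by (intro exI[of _ 0]) (simp add: tau_0)
  next
    case False
    have d: "\<forall>m t. m < N \<and> - \<bar>r\<bar> \<le> t \<and> t \<le> \<bar>r\<bar> \<longrightarrow>
        ((\<lambda>t. tau f m (p + t *\<^sub>R z) z) has_real_derivative tau f (Suc m) (p + t *\<^sub>R z) z) (at t)"
      using C by (simp add: Cfam_def)
    have d0: "(\<lambda>m t. tau f m (p + t *\<^sub>R z) z) 0 = (\<lambda>t. f (p + t *\<^sub>R z))"
      by (simp add: tau_0)
    have N0: "0 < N" using N by simp
    have ab: "- \<bar>r\<bar> \<le> (0::real)" "0 \<le> \<bar>r\<bar>" "- \<bar>r\<bar> \<le> r" "r \<le> \<bar>r\<bar>" "r \<noteq> 0"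
      using False by auto
    note T = Taylor[of N "\<lambda>m t. tau f m (p + t *\<^sub>R z) z" "\<lambda>t. f (p + t *\<^sub>R z)" "- \<bar>r\<bar>" "\<bar>r\<bar>" 0 r,
       OF N0 d0 d ab]
    obtain t where t: "(if r < 0 then r < t \<and> t < 0 else 0 < t \<and> t < r)"
      "f (p + r *\<^sub>R z) = (\<Sum>m<N. tau f m p z * r ^ m / fact m) + tau f N (p + t *\<^sub>R z) z * r ^ N / fact N"
      using T by auto
    have "\<bar>t\<bar> \<le> \<bar>r\<bar>" using t(1) by (auto split: if_splits)
    thus ?thesis using t(2) by (intro exI[of _ t]) simp
  qed
qed

lemma Dl_scale0:
  "n \<le> length y \<Longrightarrow> Dl n (map (scaleR r) y) g q = Dl n y (\<lambda>w. g (q + r *\<^sub>R w)) 0"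
proof (induct n arbitrary: q)
  case 0 thus ?case by simp
next
  case (Suc n)
  have n: "n < length y" using Suc by simp
  have e: "Dl n y (\<lambda>w. g (q + r *\<^sub>R w)) (y ! n) = Dl n y (\<lambda>w. g (q + r *\<^sub>R (w + y ! n))) 0"
    using Dl_shift[of n y "\<lambda>w. g (q + r *\<^sub>R w)" "y ! n" 0] by simp
  have "Dl (Suc n) y (\<lambda>w. g (q + r *\<^sub>R w)) 0 = Dl n y (\<lambda>w. g (q + r *\<^sub>R (w + y ! n))) 0 - Dl n y (\<lambda>w. g (q + r *\<^sub>R w)) 0"
    by (simp add: Dl_Suc e)
  also have "\<dots> = Dl n (map (scaleR r) y) g (q + r *\<^sub>R y ! n) - Dl n (map (scaleR r) y) g q"
    using Suc by (simp add: algebra_simps scaleR_add_right)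
  finally show ?case using n by (simp add: Dl_Suc)
qed

lemma Dl_sum: "Dl n us (\<lambda>p. \<Sum>i\<in>A. h i p) q = (\<Sum>i\<in>A. Dl n us (h i) q)"
  by (induct n arbitrary: q) (simp_all add: Dl_Suc sum_subtractf)

lemma Dl_tendsto:
  assumes "\<And>p. ((\<lambda>t. h t p) \<longlongrightarrow> G p) F"
  shows "((\<lambda>t. Dl n us (h t) q) \<longlongrightarrow> Dl n us G q) F"
proof (induct n arbitrary: q)
  case 0 thus ?case using assms by simp
next
  case (Suc n) thus ?case by (simp add: Dl_Suc tendsto_diff)
qed

lemma Dl_bound:
  assumes "\<And>I. I \<subseteq> {0..<n} \<Longrightarrow> \<bar>h (q + sum ((!) us) I)\<bar> \<le> B"
  shows "\<bar>Dl n us h q\<bar> \<le> 2 ^ n * B"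
  using assms
proof (induct n arbitrary: q)
  case 0 thus ?case using 0[of "{}"] by simp
next
  case (Suc n)
  have a: "\<bar>Dl n us h (q + us ! n)\<bar> \<le> 2 ^ n * B"
  proof (rule Suc.hyps)
    fix I assume I: "I \<subseteq> {0..<n}"
    hence "insert n I \<subseteq> {0..<Suc n}" "n \<notin> I" "finite I" by (auto intro: finite_subset)
    thus "\<bar>h (q + us ! n + sum ((!) us) I)\<bar> \<le> B"
      using Suc.prems[of "insert n I"] by (simp add: add.assoc)
  qed
  have b: "\<bar>Dl n us h q\<bar> \<le> 2 ^ n * B"
  proof (rule Suc.hyps)
    fix I assume "I \<subseteq> {0..<n}"
    hence "I \<subseteq> {0..<Suc n}" by auto
    thus "\<bar>h (q + sum ((!) us) I)\<bar> \<le> B" by (rule Suc.prems)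
  qed
  show ?case using a b by (simp add: Dl_Suc)
qed

lemma Dl_zero_steps: "n < length y \<Longrightarrow> Dl (Suc n) (map (scaleR 0) y) g q = 0"
  by (simp add: Dl_Suc)

lemma Dl_zero_fun: "Dl n us (\<lambda>p. 0) q = 0"
  using Dl_cmult[of n us 0 "\<lambda>p. 0" q] by simp

lemma vanish:
  fixes f :: "'a::euclidean_space \<Rightarrow> real"
  assumes H: "\<forall>k\<le>N. md_exists k 0 (\<lambda>q ws. f q) \<and> cont_on_prod k (md k (\<lambda>q ws. f q))"
  shows "j < N \<Longrightarrow> Suc j \<le> m \<Longrightarrow> m \<le> length y \<Longrightarrow> Dl m y (tau f j p) z0 = 0"
proof (induct j arbitrary: m y z0 rule: less_induct)
  case (less j)
  have LC: "Cfam N (\<lambda>i t. tau f i (p + t *\<^sub>R w) w)" "\<forall>i\<le>N. continuous_on UNIV (\<lambda>t. tau f i (p + t *\<^sub>R w) w)" for w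
    using lineC[OF H] by auto
  let ?T = "tau f j p"
  define Rem where "Rem r w = f (p + r *\<^sub>R w) - (\<Sum>i<Suc j. tau f i p w / fact i * r ^ i)" for r w
  have remlim: "((\<lambda>r. Rem r w / r ^ j) \<longlongrightarrow> 0) (at 0)" for w
  proof (rule LIM_I)
    fix e :: real assume e: "0 < e"
    have "isCont (\<lambda>t. tau f j (p + t *\<^sub>R w) w) 0"
      using LC(2)[of w] less.prems(1) by (simp add: continuous_on_eq_continuous_at)
    then obtain d where d: "0 < d" "\<And>t. \<bar>t - 0\<bar> < d \<Longrightarrow> \<bar>tau f j (p + t *\<^sub>R w) w - tau f j (p + 0 *\<^sub>R w) w\<bar> < e * fact j"
      using e unfolding continuous_at_eps_delta dist_real_def by (metis fact_gt_zero mult_pos_pos)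
    show "\<exists>s>0. \<forall>x. x \<noteq> 0 \<and> norm (x - 0) < s \<longrightarrow> norm (Rem x w / x ^ j - 0) < e"
    proof (intro exI[of _ d] conjI allI impI)
      show "0 < d" by fact
      fix r :: real assume r: "r \<noteq> 0 \<and> norm (r - 0) < d"
      obtain xi where xi: "\<bar>xi\<bar> \<le> \<bar>r\<bar>" "f (p + r *\<^sub>R w) =
          (\<Sum>m<j. tau f m p w / fact m * r ^ m) + tau f j (p + xi *\<^sub>R w) w / fact j * r ^ j"
        using taylor_line[OF Cfam_mono[OF LC(1)[of w]], of j r] less.prems(1) by auto
      have "Rem r w = (tau f j (p + xi *\<^sub>R w) w - tau f j p w) / fact j * r ^ j"
        unfolding Rem_def xi(2) by (simp add: algebra_simps diff_divide_distrib)
      hence "Rem r w / r ^ j = (tau f j (p + xi *\<^sub>R w) w - tau f j p w) / fact j"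
        using r by simp
      moreover have "\<bar>tau f j (p + xi *\<^sub>R w) w - tau f j p w\<bar> < e * fact j"
        using d(2)[of xi] xi(1) r by simp
      ultimately show "norm (Rem r w / r ^ j - 0) < e"
        by (simp add: abs_div pos_divide_less_eq)
    qed
  qed
  have S0: "Dl (Suc j) y ?T 0 = 0" if y: "Suc j \<le> length y" for y
  proof -
    have expand: "Dl (Suc j) (map (scaleR r) y) f p = r ^ j / fact j * Dl (Suc j) y ?T 0 + Dl (Suc j) y (Rem r) 0" for r
    proof -
      have "Dl (Suc j) (map (scaleR r) y) f p = Dl (Suc j) y (\<lambda>w. f (p + r *\<^sub>R w)) 0"
        using y by (rule Dl_scale0)
      also have "(\<lambda>w. f (p + r *\<^sub>R w)) = (\<lambda>w. (\<Sum>i<Suc j. (r ^ i / fact i) * tau f i p w) + Rem r w)"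
        by (intro ext) (simp add: Rem_def mult_ac)
      also have "Dl (Suc j) y (\<lambda>w. (\<Sum>i<Suc j. (r ^ i / fact i) * tau f i p w) + Rem r w) 0
          = (\<Sum>i<Suc j. (r ^ i / fact i) * Dl (Suc j) y (tau f i p) 0) + Dl (Suc j) y (Rem r) 0"
        by (simp only: Dl_add Dl_sum Dl_cmult)
      also have "(\<Sum>i<Suc j. (r ^ i / fact i) * Dl (Suc j) y (tau f i p) 0) = r ^ j / fact j * Dl (Suc j) y ?T 0"
      proof -
        have "\<And>i. i < j \<Longrightarrow> Dl (Suc j) y (tau f i p) 0 = 0"
          using less.hyps less.prems(1) y by simp
        thus ?thesis by (simp add: sum.lessThan_Suc)
      qed
      finally show ?thesis .
    qed
    define y' where "y' = take (Suc j) y"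
    have ly': "length y' = Suc j" using y by (simp add: y'_def)
    have c': "\<And>r. Dl (Suc j) (map (scaleR r) y) f p = Dl (Suc j) (map (scaleR r) y') f p"
      by (rule Dl_cong) (use y in \<open>simp add: y'_def\<close>)
    have l1: "((\<lambda>r. Dl (Suc j) (map (scaleR r) y') f p / r ^ Suc j) \<longlongrightarrow> md (Suc j) (\<lambda>q ws. f q) p y') (at 0)"
      by (rule md_F0_tendsto) (use H less.prems(1) ly' in auto)
    have "((\<lambda>r. r * (Dl (Suc j) (map (scaleR r) y') f p / r ^ Suc j)) \<longlongrightarrow> 0 * md (Suc j) (\<lambda>q ws. f q) p y') (at 0)"
      by (intro tendsto_mult l1) (auto intro: tendsto_ident_at)
    hence l2: "((\<lambda>r. Dl (Suc j) (map (scaleR r) y) f p / r ^ j) \<longlongrightarrow> 0) (at 0)"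
    proof (subst tendsto_cong)
      show "\<forall>\<^sub>F r in at 0. Dl (Suc j) (map (scaleR r) y) f p / r ^ j = r * (Dl (Suc j) (map (scaleR r) y') f p / r ^ Suc j)"
        by (auto simp: eventually_at_filter c')
    qed simp
    have l3: "((\<lambda>r. Dl (Suc j) y (Rem r) 0 / r ^ j) \<longlongrightarrow> 0) (at 0)"
    proof -
      have "((\<lambda>r. Dl (Suc j) y (\<lambda>w. Rem r w / r ^ j) 0) \<longlongrightarrow> Dl (Suc j) y (\<lambda>w. 0) 0) (at 0)"
        by (rule Dl_tendsto) (rule remlim)
      moreover have "(\<lambda>r. Dl (Suc j) y (\<lambda>w. Rem r w / r ^ j) 0) = (\<lambda>r. Dl (Suc j) y (Rem r) 0 / r ^ j)"
        using Dl_cmult[of "Suc j" y "1 / r ^ j" "Rem r" 0 for r] by (intro ext) simp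
      ultimately show ?thesis by (simp add: Dl_zero_fun)
    qed
    have "((\<lambda>r. Dl (Suc j) (map (scaleR r) y) f p / r ^ j - Dl (Suc j) y (Rem r) 0 / r ^ j) \<longlongrightarrow> 0 - 0) (at 0)"
      by (intro tendsto_diff l2 l3)
    moreover have "\<forall>\<^sub>F r in at 0. Dl (Suc j) (map (scaleR r) y) f p / r ^ j - Dl (Suc j) y (Rem r) 0 / r ^ j
        = Dl (Suc j) y ?T 0 / fact j"
      by (auto simp: eventually_at_filter expand field_simps)
    ultimately have "((\<lambda>r. Dl (Suc j) y ?T 0 / fact j) \<longlongrightarrow> 0) (at (0::real))"
      by (simp add: tendsto_cong)
    hence "Dl (Suc j) y ?T 0 / fact j = 0"
      using tendsto_const LIM_unique by blast
    thus ?thesis by simp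
  qed
  have S1: "Dl (Suc j) y ?T z = 0" if y: "Suc j \<le> length y" for y z
  proof -
    have jy: "j < length y" using y by simp
    have a: "Dl (Suc j) (y[j := z + y ! j]) ?T 0 = Dl j y ?T (z + y ! j) - Dl j y ?T 0"
    proof -
      have "Dl j (y[j := z + y ! j]) ?T x = Dl j y ?T x" for x by (rule Dl_cong) simp
      thus ?thesis using jy by (simp add: Dl_Suc)
    qed
    have b: "Dl (Suc j) (y[j := z]) ?T 0 = Dl j y ?T z - Dl j y ?T 0"
    proof -
      have "Dl j (y[j := z]) ?T x = Dl j y ?T x" for x by (rule Dl_cong) simp
      thus ?thesis using jy by (simp add: Dl_Suc)
    qed
    have "Dl (Suc j) (y[j := z + y ! j]) ?T 0 = 0" "Dl (Suc j) (y[j := z]) ?T 0 = 0"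
      using S0 y by simp_all
    thus ?thesis using a b by (simp add: Dl_Suc)
  qed
  have S2: "Dl (Suc j + k) y ?T z = 0" if "Suc j + k \<le> length y" for k y z
    using that
  proof (induct k arbitrary: z)
    case 0 thus ?case using S1 by simp
  next
    case (Suc k) thus ?case by (simp add: Dl_Suc)
  qed
  obtain k where "m = Suc j + k" using less.prems(2) by (metis le_add_diff_inverse)
  thus ?case using S2 less.prems(3) by simp
qed

lemma UC:
  fixes f :: "'a::euclidean_space \<Rightarrow> real"
  assumes H: "\<forall>k\<le>N. md_exists k 0 (\<lambda>q ws. f q) \<and> cont_on_prod k (md k (\<lambda>q ws. f q))"
    and lx: "length x = N" and e: "0 < e"
  shows "\<exists>d>0. \<forall>q' r. dist q' q < d \<longrightarrow> r \<noteq> 0 \<longrightarrow> \<bar>r\<bar> < d \<longrightarrow>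
     \<bar>Dl N (map (scaleR r) x) f q' / r ^ N - Dl N x (tau f N q) 0 / fact N\<bar> \<le> e"
proof -
  have LC: "Cfam N (\<lambda>i t. tau f i (p + t *\<^sub>R w) w)" for p w
    using lineC[OF H] by auto
  define W where "W = (\<lambda>I. sum ((!) x) I) ` Pow {0..<N}"
  have fW: "finite W" unfolding W_def by simp
  define S where "S = (\<Sum>i<N. norm (x ! i))"
  have S0: "0 \<le> S" unfolding S_def by (simp add: sum_nonneg)
  have Wn: "norm w \<le> S" if wW: "w \<in> W" for w
  proof -
    obtain I where I: "I \<subseteq> {0..<N}" "w = sum ((!) x) I" using wW unfolding W_def by auto
    have "norm w \<le> (\<Sum>i\<in>I. norm (x ! i))" unfolding I(2) by (rule norm_sum)
    also have "\<dots> \<le> (\<Sum>i\<in>{0..<N}. norm (x ! i))" by (rule sum_mono2) (use I in auto)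
    finally show ?thesis by (simp add: S_def atLeast0LessThan)
  qed
  define e' where "e' = e * fact N / 2 ^ N"
  have e': "0 < e'" using e by (simp add: e'_def)
  have ev: "eventually (\<lambda>y. \<forall>w\<in>W. \<bar>tau f N y w - tau f N q w\<bar> < e') (nhds q)"
  proof (rule eventually_ball_finite[OF fW], intro ballI)
    fix w assume "w \<in> W"
    have "isCont (\<lambda>y. md N (\<lambda>q ws. f q) y (replicate N w)) q"
      by (rule cont_prod_isCont) (use H in auto)
    then obtain d where d: "0 < d" "\<And>y. dist y q < d \<Longrightarrow> dist (md N (\<lambda>q ws. f q) y (replicate N w)) (md N (\<lambda>q ws. f q) q (replicate N w)) < e'"
      using e' unfolding continuous_at_eps_delta by blast
    show "eventually (\<lambda>y. \<bar>tau f N y w - tau f N q w\<bar> < e') (nhds q)"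
      unfolding eventually_nhds_metric using d by (intro exI[of _ d]) (auto simp: tau_def dist_real_def)
  qed
  then obtain d0 where d0: "0 < d0" "\<And>y. dist y q < d0 \<Longrightarrow> \<forall>w\<in>W. \<bar>tau f N y w - tau f N q w\<bar> < e'"
    unfolding eventually_nhds_metric by blast
  define d where "d = d0 / (S + 1)"
  have d: "0 < d" using d0 S0 by (simp add: d_def)
  show ?thesis
  proof (intro exI[of _ d] conjI allI impI)
    show "0 < d" by fact
    fix q' r assume q': "dist q' q < d" and r0: "r \<noteq> 0" and r: "\<bar>r\<bar> < d"
    define R where "R w = f (q' + r *\<^sub>R w) - (\<Sum>i<N. (r ^ i / fact i) * tau f i q' w) - (r ^ N / fact N) * tau f N q w" for w
    have key: "Dl N (map (scaleR r) x) f q' - r ^ N * (Dl N x (tau f N q) 0 / fact N) = Dl N x R 0"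
    proof -
      have "Dl N x R 0 = Dl N x (\<lambda>w. f (q' + r *\<^sub>R w)) 0 - (\<Sum>i<N. (r ^ i / fact i) * Dl N x (tau f i q') 0)
          - (r ^ N / fact N) * Dl N x (tau f N q) 0"
        unfolding R_def by (simp only: Dl_diff Dl_sum Dl_cmult)
      also have "(\<Sum>i<N. (r ^ i / fact i) * Dl N x (tau f i q') 0) = 0"
        using vanish[OF H _ _, of _ N x q' 0] lx by simp
      finally show ?thesis using Dl_scale0[of N x r f q'] lx by simp
    qed
    have bnd: "\<bar>R (0 + sum ((!) x) I)\<bar> \<le> \<bar>r\<bar> ^ N / fact N * e'" if I: "I \<subseteq> {0..<N}" for I
    proof -
      define w where "w = sum ((!) x) I"
      have wW: "w \<in> W" unfolding w_def W_def using I by auto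
      obtain xi where xi: "\<bar>xi\<bar> \<le> \<bar>r\<bar>" "f (q' + r *\<^sub>R w) =
          (\<Sum>m<N. tau f m q' w / fact m * r ^ m) + tau f N (q' + xi *\<^sub>R w) w / fact N * r ^ N"
        using taylor_line[OF LC[of q' w], of r] by auto
      have Rw: "R w = r ^ N / fact N * (tau f N (q' + xi *\<^sub>R w) w - tau f N q w)"
        unfolding R_def xi(2) by (simp add: algebra_simps)
      have "dist (q' + xi *\<^sub>R w) q \<le> dist q' q + norm (xi *\<^sub>R w)"
      proof -
        have "q' + xi *\<^sub>R w - q = (q' - q) + xi *\<^sub>R w" by (simp add: algebra_simps)
        thus ?thesis using norm_triangle_ineq[of "q' - q" "xi *\<^sub>R w"] unfolding dist_norm by (simp only:)
      qed
      also have "norm (xi *\<^sub>R w) \<le> d * S"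
      proof -
        have "norm (xi *\<^sub>R w) = \<bar>xi\<bar> * norm w" by simp
        also have "\<dots> \<le> d * S" using xi(1) r Wn[OF wW] by (intro mult_mono) auto
        finally show ?thesis .
      qed
      finally have "dist (q' + xi *\<^sub>R w) q < d * (S + 1)" using q' by (simp add: algebra_simps)
      hence "dist (q' + xi *\<^sub>R w) q < d0" using S0 by (simp add: d_def)
      hence lt: "\<bar>tau f N (q' + xi *\<^sub>R w) w - tau f N q w\<bar> < e'" using d0(2) wW by blast
      have "\<bar>R w\<bar> = \<bar>r\<bar> ^ N / fact N * \<bar>tau f N (q' + xi *\<^sub>R w) w - tau f N q w\<bar>"
        unfolding Rw by (simp add: abs_mult power_abs)
      also have "\<dots> \<le> \<bar>r\<bar> ^ N / fact N * e'"
        by (rule mult_left_mono) (use lt in auto)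
      finally have "\<bar>R w\<bar> \<le> \<bar>r\<bar> ^ N / fact N * e'" .
      thus ?thesis by (simp add: w_def)
    qed
    have "\<bar>Dl N x R 0\<bar> \<le> 2 ^ N * (\<bar>r\<bar> ^ N / fact N * e')"
      by (rule Dl_bound) (rule bnd)
    also have "\<dots> = \<bar>r\<bar> ^ N * e" using e by (simp add: e'_def field_simps)
    finally have "\<bar>Dl N (map (scaleR r) x) f q' - r ^ N * (Dl N x (tau f N q) 0 / fact N)\<bar> \<le> \<bar>r\<bar> ^ N * e"
      using key by simp
    hence "\<bar>(Dl N (map (scaleR r) x) f q' - r ^ N * (Dl N x (tau f N q) 0 / fact N)) / r ^ N\<bar> \<le> e"
      using r0 by (simp add: abs_div power_abs pos_divide_le_eq mult.commute)
    thus "\<bar>Dl N (map (scaleR r) x) f q' / r ^ N - Dl N x (tau f N q) 0 / fact N\<bar> \<le> e"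
      using r0 by (simp add: diff_divide_distrib)
  qed
qed

lemma Dl_snoc_step:
  assumes "length vs = n"
  shows "Dl (Suc n) (map (scaleR a) (vs @ [v])) H q = Dl n (map (scaleR a) vs) (\<lambda>x. H (x + a *\<^sub>R v) - H x) q"
proof -
  have c: "\<And>x. Dl n (map (scaleR a) vs @ [a *\<^sub>R v]) H x = Dl n (map (scaleR a) vs) H x"
    by (rule Dl_cong) (use assms in \<open>simp add: nth_append\<close>)
  have "Dl (Suc n) (map (scaleR a) (vs @ [v])) H q = Dl n (map (scaleR a) vs) H (q + a *\<^sub>R v) - Dl n (map (scaleR a) vs) H q"
    using assms by (simp add: Dl_Suc c nth_append)
  also have "\<dots> = Dl n (map (scaleR a) vs) (\<lambda>x. H (x + a *\<^sub>R v) - H x) q"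
    by (simp add: Dl_diff Dl_shift)
  finally show ?thesis .
qed

lemma avg_subdiv:
  fixes H :: "'a::real_normed_vector \<Rightarrow> real" and us :: "'a list" and m :: nat
  assumes m: "1 \<le> m"
  shows "(\<And>q'. norm (q' - q) \<le> real m * \<bar>r\<bar> * sum_list (map norm us) \<Longrightarrow>
      \<bar>Dl (length us) (map (scaleR r) us) H q' - r ^ length us * C\<bar> \<le> \<bar>r\<bar> ^ length us * e) \<Longrightarrow>
    \<bar>Dl (length us) (map (scaleR (real m * r)) us) H q - (real m * r) ^ length us * C\<bar> \<le> \<bar>real m * r\<bar> ^ length us * e"
proof (induct us arbitrary: H C e rule: rev_induct)
  case Nil thus ?case using Nil[of q] by simp
next
  case (snoc v vs)
  let ?n = "length vs"
  define h where "h l x = H (x + (real (Suc l) * r) *\<^sub>R v) - H (x + (real l * r) *\<^sub>R v)" for l x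
  have tele: "H (x + (real m * r) *\<^sub>R v) - H x = (\<Sum>l<m. h l x)" for x
  proof -
    have "(\<Sum>l<m. h l x) = (\<Sum>l<m. H (x + (real (Suc l) * r) *\<^sub>R v) - H (x + (real l * r) *\<^sub>R v))"
      by (simp add: h_def)
    also have "\<dots> = H (x + (real m * r) *\<^sub>R v) - H (x + (real 0 * r) *\<^sub>R v)"
      by (rule sum_lessThan_telescope)
    finally show ?thesis by simp
  qed
  have LHS: "Dl (Suc ?n) (map (scaleR (real m * r)) (vs @ [v])) H q = (\<Sum>l<m. Dl ?n (map (scaleR (real m * r)) vs) (h l) q)"
    unfolding Dl_snoc_step[OF refl] tele Dl_sum ..
  have IHl: "\<bar>Dl ?n (map (scaleR (real m * r)) vs) (h l) q - (real m * r) ^ ?n * (r * C)\<bar> \<le> \<bar>real m * r\<bar> ^ ?n * (\<bar>r\<bar> * e)"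
    if l: "l < m" for l
  proof (rule snoc.hyps)
    fix q' assume q': "norm (q' - q) \<le> real m * \<bar>r\<bar> * sum_list (map norm vs)"
    have e1: "Dl ?n (map (scaleR r) vs) (h l) q' = Dl (Suc ?n) (map (scaleR r) (vs @ [v])) H (q' + (real l * r) *\<^sub>R v)"
    proof -
      let ?c = "(real l * r) *\<^sub>R v"
      have s1: "Dl ?n (map (scaleR r) vs) (\<lambda>p. H (p + ?c + r *\<^sub>R v) - H (p + ?c)) q'
          = Dl ?n (map (scaleR r) vs) (\<lambda>y. H (y + r *\<^sub>R v) - H y) (q' + ?c)"
        using Dl_shift[of ?n "map (scaleR r) vs" "\<lambda>y. H (y + r *\<^sub>R v) - H y" ?c q'] by simp
      have hl: "h l = (\<lambda>p. H (p + ?c + r *\<^sub>R v) - H (p + ?c))"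
        by (intro ext) (simp add: h_def algebra_simps scaleR_add_left)
      have "Dl ?n (map (scaleR r) vs) (h l) q' = Dl ?n (map (scaleR r) vs) (\<lambda>y. H (y + r *\<^sub>R v) - H y) (q' + ?c)"
        unfolding hl s1 ..
      thus ?thesis using Dl_snoc_step[of vs ?n r v H "q' + (real l * r) *\<^sub>R v"] by simp
    qed
    have "norm (q' + (real l * r) *\<^sub>R v - q) \<le> norm (q' - q) + norm ((real l * r) *\<^sub>R v)"
    proof -
      have "q' + (real l * r) *\<^sub>R v - q = (q' - q) + (real l * r) *\<^sub>R v" by (simp add: algebra_simps)
      thus ?thesis using norm_triangle_ineq[of "q' - q" "(real l * r) *\<^sub>R v"] by (simp only:)
    qed
    also have "norm ((real l * r) *\<^sub>R v) \<le> real m * \<bar>r\<bar> * norm v"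
      using l by (simp add: abs_mult mult_right_mono)
    finally have "norm (q' + (real l * r) *\<^sub>R v - q) \<le> real m * \<bar>r\<bar> * sum_list (map norm (vs @ [v]))"
      using q' by (simp add: algebra_simps)
    from snoc.prems[OF this]
    show "\<bar>Dl ?n (map (scaleR r) vs) (h l) q' - r ^ ?n * (r * C)\<bar> \<le> \<bar>r\<bar> ^ ?n * (\<bar>r\<bar> * e)"
      unfolding e1 by (simp add: mult_ac)
  qed
  have "\<bar>(\<Sum>l<m. Dl ?n (map (scaleR (real m * r)) vs) (h l) q) - real m * ((real m * r) ^ ?n * (r * C))\<bar>
      = \<bar>\<Sum>l<m. (Dl ?n (map (scaleR (real m * r)) vs) (h l) q - (real m * r) ^ ?n * (r * C))\<bar>"
    by (simp add: sum_subtractf)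
  also have "\<dots> \<le> (\<Sum>l<m. \<bar>Dl ?n (map (scaleR (real m * r)) vs) (h l) q - (real m * r) ^ ?n * (r * C)\<bar>)"
    by (rule sum_abs)
  also have "\<dots> \<le> (\<Sum>l<m. \<bar>real m * r\<bar> ^ ?n * (\<bar>r\<bar> * e))"
    by (rule sum_mono) (rule IHl, simp)
  also have "\<dots> = \<bar>real m * r\<bar> ^ Suc ?n * e"
    by (simp add: abs_mult power_mult_distrib mult_ac)
  finally have X: "\<bar>(\<Sum>l<m. Dl ?n (map (scaleR (real m * r)) vs) (h l) q) - real m * ((real m * r) ^ ?n * (r * C))\<bar>
      \<le> \<bar>real m * r\<bar> ^ Suc ?n * e" .
  have L2: "Dl (length (vs @ [v])) (map (scaleR (real m * r)) (vs @ [v])) H q = (\<Sum>l<m. Dl ?n (map (scaleR (real m * r)) vs) (h l) q)"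
    using LHS by simp
  have P2: "(real m * r) ^ length (vs @ [v]) * C = real m * ((real m * r) ^ ?n * (r * C))"
    by (simp add: algebra_simps)
  have P3: "\<bar>real m * r\<bar> ^ length (vs @ [v]) * e = \<bar>real m * r\<bar> ^ Suc ?n * e" by simp
  show ?case unfolding L2 P2 P3 using X .
qed

theorem proposition11:
  fixes f :: "'a::euclidean_space \<Rightarrow> real" and n1 n2 :: nat
  assumes "\<forall>k\<le>n1 + n2. md_exists k 0 (\<lambda>q ws. f q) \<and> cont_on_prod k (md k (\<lambda>q ws. f q))"
    and "md_exists n1 n2 (md n2 (\<lambda>q ws. f q))"
  shows "\<forall>q us. length us = n1 + n2 \<longrightarrow>
           md n1 (md n2 (\<lambda>q ws. f q)) q us = md (n1 + n2) (\<lambda>q ws. f q) q us"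
proof (intro allI impI)
  fix q :: 'a and us :: "'a list"
  assume lus: "length us = n1 + n2"
  define N where "N = n1 + n2"
  have H: "\<forall>k\<le>N. md_exists k 0 (\<lambda>q ws. f q) \<and> cont_on_prod k (md k (\<lambda>q ws. f q))"
    using assms(1) by (simp add: N_def)
  have lusN: "length us = N" using lus by (simp add: N_def)
  define u where "u = take n1 us"
  define w where "w = drop n1 us"
  have lu: "length u = n1" "length w = n2" "u @ w = us"
    using lus by (simp_all add: u_def w_def)
  define G where "G p = md n2 (\<lambda>q ws. f q) p w" for p
  have Gt: "((\<lambda>t. Dl n2 (map (scaleR t) w) f p / t ^ n2) \<longlongrightarrow> G p) (at 0)" for p
    unfolding G_def by (rule md_F0_tendsto) (use H lu in \<open>auto simp: N_def\<close>)
  define M where "M = Dl N us (tau f N q) 0 / fact N"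
  have UCq: "\<exists>d>0. \<forall>q' r. dist q' q < d \<longrightarrow> r \<noteq> 0 \<longrightarrow> \<bar>r\<bar> < d \<longrightarrow>
     \<bar>Dl N (map (scaleR r) us) f q' / r ^ N - M\<bar> \<le> e" if "0 < e" for e
    unfolding M_def by (rule UC[OF H lusN that])
  have RHS: "md N (\<lambda>q ws. f q) q us = M"
  proof -
    have "((\<lambda>r. Dl N (map (scaleR r) us) f q / r ^ N) \<longlongrightarrow> M) (at 0)"
    proof (rule LIM_I)
      fix e :: real assume e: "0 < e"
      obtain d where d: "0 < d" "\<forall>q' r. dist q' q < d \<longrightarrow> r \<noteq> 0 \<longrightarrow> \<bar>r\<bar> < d \<longrightarrow>
         \<bar>Dl N (map (scaleR r) us) f q' / r ^ N - M\<bar> \<le> e / 2"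
        using UCq[of "e / 2"] e by auto
      show "\<exists>s>0. \<forall>x. x \<noteq> 0 \<and> norm (x - 0) < s \<longrightarrow> norm (Dl N (map (scaleR x) us) f q / x ^ N - M) < e"
      proof (intro exI[of _ d] conjI allI impI)
        show "0 < d" by (rule d(1))
        fix x :: real assume x: "x \<noteq> 0 \<and> norm (x - 0) < d"
        have "\<bar>Dl N (map (scaleR x) us) f q / x ^ N - M\<bar> \<le> e / 2"
          using d(2) x d(1) by simp
        thus "norm (Dl N (map (scaleR x) us) f q / x ^ N - M) < e" using e by simp
      qed
    qed
    moreover have "((\<lambda>r. Dl N (map (scaleR r) us) f q / r ^ N) \<longlongrightarrow> md N (\<lambda>q ws. f q) q us) (at 0)"
      by (rule md_F0_tendsto) (use H lusN in auto)
    ultimately show ?thesis using LIM_unique by blast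
  qed
  have LHSlim: "((\<lambda>s. Dl n1 (map (scaleR s) u) G q / s ^ n1) \<longlongrightarrow> M) (at 0)"
  proof (rule LIM_I)
    fix e :: real assume e: "0 < e"
    obtain d where d: "0 < d" "\<And>q' r. dist q' q < d \<Longrightarrow> r \<noteq> 0 \<Longrightarrow> \<bar>r\<bar> < d \<Longrightarrow>
         \<bar>Dl N (map (scaleR r) us) f q' / r ^ N - M\<bar> \<le> e / 2"
      using UCq[of "e / 2"] e by auto
    define S where "S = sum_list (map norm u)"
    have S0: "0 \<le> S" unfolding S_def by (induct u) simp_all
    define d' where "d' = d / (S + 1)"
    have d': "0 < d'" using d S0 by (simp add: d'_def)
    show "\<exists>s>0. \<forall>x. x \<noteq> 0 \<and> norm (x - 0) < s \<longrightarrow> norm (Dl n1 (map (scaleR x) u) G q / x ^ n1 - M) < e"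
    proof (intro exI[of _ d'] conjI allI impI)
      show "0 < d'" by fact
      fix s :: real assume s: "s \<noteq> 0 \<and> norm (s - 0) < d'"
      have sS: "\<bar>s\<bar> * S < d" and sd: "\<bar>s\<bar> < d"
      proof -
        have "\<bar>s\<bar> * (S + 1) < d" using s S0 by (simp add: d'_def field_simps)
        thus "\<bar>s\<bar> * S < d" "\<bar>s\<bar> < d" using S0 by (simp_all add: algebra_simps) (smt (verit) mult_nonneg_nonneg abs_ge_zero)
      qed
      define t where "t m = s / real (Suc m)" for m
      have t0: "t m \<noteq> 0" for m using s by (simp add: t_def)
      have tm: "real (Suc m) * t m = s" for m by (simp add: t_def)
      have tle: "\<bar>t m\<bar> \<le> \<bar>s\<bar>" for m
      proof -
        have "\<bar>t m\<bar> = \<bar>s\<bar> / real (Suc m)" by (simp add: t_def abs_div)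
        also have "\<dots> \<le> \<bar>s\<bar> / 1" by (rule divide_left_mono) auto
        finally show ?thesis by simp
      qed
      have bnd: "\<bar>Dl n1 (map (scaleR s) u) (\<lambda>p. Dl n2 (map (scaleR (t m)) w) f p / t m ^ n2) q / s ^ n1 - M\<bar> \<le> e / 2" for m
      proof -
        let ?t = "t m"
        let ?H = "\<lambda>p. Dl n2 (map (scaleR ?t) w) f p"
        have avg: "\<bar>Dl (length u) (map (scaleR (real (Suc m) * ?t)) u) ?H q - (real (Suc m) * ?t) ^ length u * (?t ^ n2 * M)\<bar>
            \<le> \<bar>real (Suc m) * ?t\<bar> ^ length u * (\<bar>?t\<bar> ^ n2 * (e / 2))"
        proof (rule avg_subdiv)
          show "1 \<le> Suc m" by simp
        next
          fix q' assume q': "norm (q' - q) \<le> real (Suc m) * \<bar>?t\<bar> * sum_list (map norm u)"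
          have comp: "Dl (length u) (map (scaleR ?t) u) ?H q' = Dl N (map (scaleR ?t) us) f q'"
          proof -
            have "Dl (n1 + n2) (map (scaleR ?t) u @ map (scaleR ?t) w) f q' = Dl n1 (map (scaleR ?t) u) ?H q'"
              by (rule Dl_compose) (simp add: lu)
            moreover have "map (scaleR ?t) us = map (scaleR ?t) u @ map (scaleR ?t) w"
              using lu(3) by (metis map_append)
            ultimately show ?thesis using lu by (simp add: N_def)
          qed
          have "\<bar>s\<bar> = \<bar>real (Suc m) * ?t\<bar>" using tm[of m] by simp
          hence "real (Suc m) * \<bar>?t\<bar> = \<bar>s\<bar>" by (simp add: abs_mult)
          hence "dist q' q < d" using q' sS by (simp add: dist_norm S_def)
          hence "\<bar>Dl N (map (scaleR ?t) us) f q' / ?t ^ N - M\<bar> \<le> e / 2"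
            using d(2)[of q' ?t] t0 tle[of m] sd by simp
          hence "\<bar>(Dl N (map (scaleR ?t) us) f q' - ?t ^ N * M) / ?t ^ N\<bar> \<le> e / 2"
            using t0 by (simp add: diff_divide_distrib)
          hence "\<bar>Dl N (map (scaleR ?t) us) f q' - ?t ^ N * M\<bar> \<le> \<bar>?t\<bar> ^ N * (e / 2)"
            using t0 by (simp add: abs_div power_abs divide_le_eq mult.commute)
          thus "\<bar>Dl (length u) (map (scaleR ?t) u) ?H q' - ?t ^ length u * (?t ^ n2 * M)\<bar> \<le> \<bar>?t\<bar> ^ length u * (\<bar>?t\<bar> ^ n2 * (e / 2))"
            unfolding comp using lu by (simp add: N_def power_add mult_ac)
        qed
        hence avg': "\<bar>Dl n1 (map (scaleR s) u) ?H q - s ^ n1 * (?t ^ n2 * M)\<bar> \<le> \<bar>s\<bar> ^ n1 * (\<bar>?t\<bar> ^ n2 * (e / 2))"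
          unfolding tm lu(1) .
        have cm: "Dl n1 (map (scaleR s) u) (\<lambda>p. ?H p / ?t ^ n2) q = (1 / ?t ^ n2) * Dl n1 (map (scaleR s) u) ?H q"
          using Dl_cmult[of n1 "map (scaleR s) u" "1 / ?t ^ n2" ?H q] by simp
        have "Dl n1 (map (scaleR s) u) (\<lambda>p. ?H p / ?t ^ n2) q / s ^ n1 - M
            = (Dl n1 (map (scaleR s) u) ?H q - s ^ n1 * (?t ^ n2 * M)) / (s ^ n1 * ?t ^ n2)"
          unfolding cm using s t0[of m] by (simp add: field_simps)
        hence "\<bar>Dl n1 (map (scaleR s) u) (\<lambda>p. ?H p / ?t ^ n2) q / s ^ n1 - M\<bar>
            = \<bar>Dl n1 (map (scaleR s) u) ?H q - s ^ n1 * (?t ^ n2 * M)\<bar> / (\<bar>s\<bar> ^ n1 * \<bar>?t\<bar> ^ n2)"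
          by (simp add: abs_div abs_mult power_abs)
        also have "\<dots> \<le> e / 2"
          using avg' s t0[of m] by (simp add: divide_le_eq mult_ac)
        finally show ?thesis .
      qed
      have tl: "filterlim t (at 0) sequentially"
      proof -
        have "t \<longlonglongrightarrow> 0"
          unfolding t_def using LIMSEQ_Suc[OF lim_const_over_n[of s]] by simp
        thus ?thesis using t0 by (simp add: filterlim_at)
      qed
      have "(\<lambda>m. Dl n1 (map (scaleR s) u) (\<lambda>p. Dl n2 (map (scaleR (t m)) w) f p / t m ^ n2) q) \<longlonglongrightarrow> Dl n1 (map (scaleR s) u) G q"
      proof (rule Dl_tendsto)
        fix p
        show "(\<lambda>m. Dl n2 (map (scaleR (t m)) w) f p / t m ^ n2) \<longlonglongrightarrow> G p"
          using filterlim_compose[OF Gt[of p] tl] by simp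
      qed
      hence "(\<lambda>m. \<bar>Dl n1 (map (scaleR s) u) (\<lambda>p. Dl n2 (map (scaleR (t m)) w) f p / t m ^ n2) q / s ^ n1 - M\<bar>)
          \<longlonglongrightarrow> \<bar>Dl n1 (map (scaleR s) u) G q / s ^ n1 - M\<bar>"
        using s by (intro tendsto_intros) auto
      hence "\<bar>Dl n1 (map (scaleR s) u) G q / s ^ n1 - M\<bar> \<le> e / 2"
        by (rule LIMSEQ_le_const2) (use bnd in auto)
      thus "norm (Dl n1 (map (scaleR s) u) G q / s ^ n1 - M) < e" using e by simp
    qed
  qed
  have LHS: "md n1 (md n2 (\<lambda>q ws. f q)) q us = M"
  proof -
    have "md_quot n1 (md n2 (\<lambda>q ws. f q)) q us = (\<lambda>s. Dl n1 (map (scaleR s) u) G q / s ^ n1)"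
    proof
      fix s
      have "md_quot n1 (md n2 (\<lambda>q ws. f q)) q us s = Dl n1 (map (scaleR s) us) (\<lambda>p. md n2 (\<lambda>q ws. f q) p (drop n1 us)) q / s ^ n1"
        by (rule md_quot_Dl) (simp add: lus)
      also have "Dl n1 (map (scaleR s) us) (\<lambda>p. md n2 (\<lambda>q ws. f q) p (drop n1 us)) q = Dl n1 (map (scaleR s) u) G q"
        unfolding G_def w_def by (rule Dl_cong) (use lus in \<open>simp add: u_def\<close>)
      finally show "md_quot n1 (md n2 (\<lambda>q ws. f q)) q us s = Dl n1 (map (scaleR s) u) G q / s ^ n1" .
    qed
    thus ?thesis unfolding md_def using LHSlim by (simp add: tendsto_Lim)
  qed
  show "md n1 (md n2 (\<lambda>q ws. f q)) q us = md (n1 + n2) (\<lambda>q ws. f q) q us"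
    using LHS RHS by (simp add: N_def)
qed


end
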